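(* Let $L$ be a real-valued Lévy process with characteristics $(b,q,\lambda)$ with respect to the truncation function $\tau$, let $s<t$, and let $(\pi_n)_{n\in\mathbb N}$ be a normal sequence of partitions $\pi_n=(p_{k,n})_{k=0,\dots,m_n}$ of $[s,t]$. Put $d_{k,n}=L(p_{k,n})-L(p_{k-1,n})$. Then (a) $\lim_{n\to\infty}\sum_{k=1}^{m_n}E[\tau(d_{k,n})]=(t-s)b$; (b) $\lim_{n\to\infty}\sum_{k=1}^{m_n}E[\tau^2(d_{k,n})]=(t-s)\Big(\int_{\mathbb R}(|\beta|^2\wedge1)\,\lambda(d\beta)+q\Big)$.
   Context: The truncation function is $\tau(\alpha)=\alpha$ for $|\alpha|\le1$ and $\tau(\alpha)=\alpha/|\alpha|$ for $|\alpha|>1$. A real-valued Lévy process $L$ has characteristics $(b,q,\lambda)$ with respect to $\tau$ if $E[e^{i\beta L(1)}]=\exp\big(i\beta b-\tfrac12 q\beta^2+\int_{\mathbb R}(e^{i\beta\alpha}-1-i\beta\tau(\alpha))\lambda(d\alpha)\big)$ for all $\beta\in\mathbb R$. A normal sequence of partitions of $[s,t]$ is a sequence of partitions $s=p_{0,n}<p_{1,n}<\dots<p_{m_n,n}=t$ whose mesh $\max_k(p_{k,n}-p_{k-1,n})$ tends to $0$. *)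

theory Defs
  imports "HOL-Probability.Probability"
begin

definition trunc :: "real \<Rightarrow> real" where
  "trunc \<alpha> = (if \<bar>\<alpha>\<bar> \<le> 1 then \<alpha> else \<alpha> / \<bar>\<alpha>\<bar>)"

definition levy_process :: "'a measure \<Rightarrow> (real \<Rightarrow> 'a \<Rightarrow> real) \<Rightarrow> bool" where
  "levy_process M L \<longleftrightarrow>
     prob_space M \<and>
     (\<forall>t\<ge>0. L t \<in> borel_measurable M) \<and>
     (AE \<omega> in M. L 0 \<omega> = 0) \<and>
     (\<forall>(n::nat) (u::nat \<Rightarrow> real). 0 \<le> u 0 \<and> (\<forall>i<n. u i < u (Suc i)) \<longrightarrow>
        prob_space.indep_vars M (\<lambda>_. borel) (\<lambda>i \<omega>. L (u (Suc i)) \<omega> - L (u i) \<omega>) {..<n}) \<and>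
     (\<forall>s t. 0 \<le> s \<and> s \<le> t \<longrightarrow>
        distr M borel (\<lambda>\<omega>. L t \<omega> - L s \<omega>) = distr M borel (L (t - s))) \<and>
     (\<forall>t\<ge>0. \<forall>e>0. ((\<lambda>h. measure M {\<omega>\<in>space M. e < \<bar>L (t + h) \<omega> - L t \<omega>\<bar>}) \<longlongrightarrow> 0)
        (at 0 within {-t..})) \<and>
     (AE \<omega> in M. \<forall>t\<ge>0. continuous (at_right t) (\<lambda>u. L u \<omega>) \<and>
        (t > 0 \<longrightarrow> (\<exists>l. ((\<lambda>u. L u \<omega>) \<longlongrightarrow> l) (at_left t))))"

definition levy_characteristics ::
  "'a measure \<Rightarrow> (real \<Rightarrow> 'a \<Rightarrow> real) \<Rightarrow> real \<Rightarrow> real \<Rightarrow> real measure \<Rightarrow> bool" where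
  "levy_characteristics M L b q lam \<longleftrightarrow>
     0 \<le> q \<and> sets lam = sets borel \<and> emeasure lam {0} = 0 \<and>
     integrable lam (\<lambda>\<alpha>. min (\<alpha>\<^sup>2) 1) \<and>
     (\<forall>\<beta>::real. char (distr M borel (L 1)) \<beta> =
        exp (\<i> * complex_of_real (\<beta> * b) - complex_of_real (q * \<beta>\<^sup>2 / 2)
             + (CLINT \<alpha>|lam. iexp (\<beta> * \<alpha>) - 1 - \<i> * complex_of_real (\<beta> * trunc \<alpha>))))"

definition normal_partitions :: "real \<Rightarrow> real \<Rightarrow> (nat \<Rightarrow> nat) \<Rightarrow> (nat \<Rightarrow> nat \<Rightarrow> real) \<Rightarrow> bool" where
  "normal_partitions s t m p \<longleftrightarrow>
     (\<forall>n. p n 0 = s \<and> p n (m n) = t \<and> (\<forall>k<m n. p n k < p n (Suc k))) \<and>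
     (\<lambda>n. Max {p n k - p n (k - 1) | k. 1 \<le> k \<and> k \<le> m n}) \<longlonglongrightarrow> 0"

end

theory Submission
  imports Defs "HOL-Probability.Probability"
begin

definition kk :: "real \<Rightarrow> real" where
  "kk x = (if x = 0 then 0 else 1 - sin x / x)"

definition ww :: "real \<Rightarrow> real" where
  "ww x = min (x\<^sup>2) 1"

lemma trunc_alt: "trunc x = max (-1) (min 1 x)"
  unfolding trunc_def by (auto simp: abs_if)

lemma continuous_trunc[continuous_intros]: "continuous_on S trunc"
  unfolding trunc_alt by (intro continuous_intros)

lemma isCont_trunc[continuous_intros]: "isCont trunc x"
  unfolding trunc_alt by (intro continuous_intros)

lemma trunc_measurable[measurable]: "trunc \<in> borel_measurable borel"
  by (intro borel_measurable_continuous_onI continuous_trunc)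

lemma abs_trunc_le1: "\<bar>trunc x\<bar> \<le> 1"
  unfolding trunc_alt by auto

lemma abs_trunc_le: "\<bar>trunc x\<bar> \<le> \<bar>x\<bar>"
  unfolding trunc_alt by auto

lemma trunc_sq: "(trunc x)\<^sup>2 = ww x"
proof (cases "\<bar>x\<bar> \<le> 1")
  case True
  then show ?thesis unfolding trunc_def ww_def
    by (auto simp: abs_le_square_iff[of x 1, simplified] min_def power2_eq_square)
next
  case False
  then have "x\<^sup>2 > 1" by (metis abs_le_square_iff[of x 1, simplified] not_le one_less_power
       one_power2 power2_abs) 
  then show ?thesis using False unfolding trunc_def ww_def by (auto simp: power_divide)
qed

lemma ww_measurable[measurable]: "ww \<in> borel_measurable borel"
  unfolding ww_def by measurable

lemma kk_measurable[measurable]: "kk \<in> borel_measurable borel"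
  unfolding kk_def by measurable

lemma ww_nonneg: "0 \<le> ww x" unfolding ww_def by auto

lemma sin_upper5:
  fixes x :: real assumes "0 \<le> x" shows "sin x \<le> x - x^3/6 + x^5/120"
proof -
  have "\<bar>sin x - (\<Sum>m<5. sin_coeff m * x ^ m)\<bar> \<le> inverse (fact 5) * \<bar>x\<bar> ^ 5"
    by (rule Maclaurin_sin_bound)
  moreover have "(\<Sum>m<5. sin_coeff m * x ^ m) = x - x^3/6"
    by (simp add: lessThan_nat_numeral sin_coeff_def fact_numeral)
  moreover have "inverse (fact 5) * \<bar>x\<bar> ^ 5 = x^5/120" using assms
    by (simp add: fact_numeral)
  ultimately show ?thesis by linarith
qed

lemma sin_lower4:
  fixes x :: real shows "sin x \<ge> x - x^3/6 - x^4/24"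
proof -
  have "\<bar>sin x - (\<Sum>m<4. sin_coeff m * x ^ m)\<bar> \<le> inverse (fact 4) * \<bar>x\<bar> ^ 4"
    by (rule Maclaurin_sin_bound)
  moreover have "(\<Sum>m<4. sin_coeff m * x ^ m) = x - x^3/6"
    by (simp add: lessThan_nat_numeral sin_coeff_def fact_numeral)
  moreover have "inverse (fact 4) * \<bar>x\<bar> ^ 4 = x^4/24"
    by (simp add: fact_numeral power_even_abs_numeral)
  ultimately show ?thesis by linarith
qed

lemma kk_even: "kk (-x) = kk x"
  unfolding kk_def by auto

lemma ww_even: "ww (-x) = ww x"
  unfolding ww_def by auto

lemma kk_bounds_pos:
  fixes x :: real assumes "0 < x"
  shows "kk x \<le> 2 * ww x" "(2/15) * ww x \<le> kk x"
proof -
  have k: "kk x = 1 - sin x / x" using assms by (simp add: kk_def)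
  have s1: "sin x \<le> x" using sin_x_le_x assms by auto
  have s2: "sin x \<ge> - x" using abs_sin_x_le_abs_x[of x] assms by auto
  show "kk x \<le> 2 * ww x"
  proof (cases "x \<le> 1")
    case True
    have "sin x \<ge> x - x^3/6 - x^4/24" by (rule sin_lower4)
    moreover have "(1 - x^2/6 - x^3/24) * x = x - x^3/6 - x^4/24"
      by (simp add: field_simps power2_eq_square power3_eq_cube power4_eq_xxxx)
    ultimately have "sin x / x \<ge> 1 - x^2/6 - x^3/24" using assms
      by (simp add: le_divide_eq)
    moreover have "x^3 \<le> x^2" using True assms
      by (simp add: power_decreasing)
    ultimately have "kk x \<le> x^2" unfolding k using zero_le_power2[of x]
      by linarith
    then show ?thesis using True assms unfolding ww_def
      by (smt (verit, ccfv_SIG) min_def power_le_one zero_le_power2)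
  next
    case False
    have "sin x / x \<ge> -1" using s2 assms by (simp add: field_simps)
    then show ?thesis using False unfolding k ww_def
      by (smt (verit) less_1_mult min_def power2_eq_square)
  qed
  show "(2/15) * ww x \<le> kk x"
  proof (cases "x \<le> 2")
    case True
    have "sin x \<le> x - x^3/6 + x^5/120" using assms by (intro sin_upper5) auto
    moreover have "(1 - x^2/6 + x^4/120) * x = x - x^3/6 + x^5/120"
      by (simp add: field_simps power2_eq_square power3_eq_cube power4_eq_xxxx numeral_eq_Suc)
    ultimately have "sin x / x \<le> 1 - x^2/6 + x^4/120" using assms
      by (simp add: divide_le_eq)
    moreover have "x^4 \<le> 4 * x^2"
    proof -
      have "x^2 \<le> 2^2" using True assms by (intro power_mono) auto
      then have "x^2 * x^2 \<le> 4 * x^2" by (intro mult_right_mono) auto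
      then show ?thesis using power_add[of x 2 2] by simp
    qed
    ultimately have "kk x \<ge> (2/15) * x^2" unfolding k by linarith
    then show ?thesis unfolding ww_def
      by (smt (verit) min_def mult_left_mono zero_le_divide_iff zero_le_power2 zero_less_numeral)
  next
    case False
    have "sin x \<le> 1/2 * x" using False sin_le_one[of x] by linarith
    then have "sin x / x \<le> 1/2" using assms by (simp add: divide_le_eq)
    then show ?thesis unfolding k ww_def by (simp add: min_def)
  qed
qed

lemma kk_le: "kk x \<le> 2 * ww x"
proof -
  consider "x = 0" | "x > 0" | "x < 0" by linarith
  then show ?thesis
  proof cases
    case 1 then show ?thesis by (simp add: kk_def ww_def)
  next
    case 2 then show ?thesis using kk_bounds_pos by auto
  next
    case 3 then show ?thesis using kk_bounds_pos[of "-x"] by (simp add: kk_even ww_even)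
  qed
qed

lemma kk_ge: "(2/15) * ww x \<le> kk x"
proof -
  consider "x = 0" | "x > 0" | "x < 0" by linarith
  then show ?thesis
  proof cases
    case 1 then show ?thesis by (simp add: kk_def ww_def)
  next
    case 2 then show ?thesis using kk_bounds_pos by auto
  next
    case 3 then show ?thesis using kk_bounds_pos[of "-x"] by (simp add: kk_even ww_even)
  qed
qed

lemma ww_pos: "x \<noteq> 0 \<Longrightarrow> 0 < ww x"
  unfolding ww_def by auto

lemma kk_pos: "x \<noteq> 0 \<Longrightarrow> 0 < kk x"
proof -
  assume "x \<noteq> 0"
  then have "0 < (2/15) * ww x" using ww_pos[of x] by simp
  then show ?thesis using kk_ge[of x] by linarith
qed

lemma kk_nonneg: "0 \<le> kk x"
proof -
  have "0 \<le> (2/15) * ww x" using ww_nonneg[of x] by simp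
  then show ?thesis using kk_ge[of x] by linarith
qed

lemma kk_le2: "kk x \<le> 2"
  using kk_le[of x] unfolding ww_def by linarith

lemma meas_lam: "sets N = sets borel \<Longrightarrow> f \<in> borel_measurable borel \<Longrightarrow> f \<in> borel_measurable N"
  using measurable_cong_sets[of N borel borel borel] by auto

definition psi :: "real \<Rightarrow> real \<Rightarrow> real measure \<Rightarrow> real \<Rightarrow> complex" where
  "psi b q lam \<beta> = \<i> * complex_of_real (\<beta> * b) - complex_of_real (q * \<beta>\<^sup>2 / 2)
     + (CLINT \<alpha>|lam. iexp (\<beta> * \<alpha>) - 1 - \<i> * complex_of_real (\<beta> * trunc \<alpha>))"

lemma lk_bound:
  "cmod (iexp (\<beta> * \<alpha>) - 1 - \<i> * complex_of_real (\<beta> * trunc \<alpha>)) \<le> (\<beta>\<^sup>2/2 + \<bar>\<beta>\<bar> + 2) * ww \<alpha>"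
proof (cases "\<bar>\<alpha>\<bar> \<le> 1")
  case True
  have "cmod (iexp (\<beta> * \<alpha>) - (\<Sum>k \<le> 1. (\<i> * (\<beta> * \<alpha>))^k / fact k)) \<le> \<bar>\<beta> * \<alpha>\<bar>^(Suc 1) / fact (Suc 1)"
    by (rule iexp_approx1)
  moreover have "(\<Sum>k \<le> 1. (\<i> * (\<beta> * \<alpha>))^k / fact k) = 1 + \<i> * complex_of_real (\<beta> * \<alpha>)"
    by simp
  moreover have "trunc \<alpha> = \<alpha>" using True by (simp add: trunc_def)
  moreover have "ww \<alpha> = \<alpha>\<^sup>2" using True unfolding ww_def
    by (simp add: abs_le_square_iff[of \<alpha> 1, simplified])
  moreover have "\<bar>\<beta> * \<alpha>\<bar>^(Suc 1) / fact (Suc 1) = \<beta>\<^sup>2/2 * \<alpha>\<^sup>2"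
    by (simp add: power_mult_distrib power2_eq_square)
  moreover have "\<beta>\<^sup>2/2 * \<alpha>\<^sup>2 \<le> (\<beta>\<^sup>2/2 + \<bar>\<beta>\<bar> + 2) * \<alpha>\<^sup>2"
    by (intro mult_right_mono) auto
  ultimately show ?thesis by (simp add: diff_diff_add)
next
  case False
  then have w: "ww \<alpha> = 1" unfolding ww_def
    by (simp add: abs_le_square_iff[of \<alpha> 1, simplified])
  have "cmod (iexp (\<beta> * \<alpha>) - 1 - \<i> * complex_of_real (\<beta> * trunc \<alpha>))
        \<le> cmod (iexp (\<beta> * \<alpha>)) + cmod 1 + cmod (\<i> * complex_of_real (\<beta> * trunc \<alpha>))"
    using norm_triangle_ineq4[of "iexp (\<beta> * \<alpha>) - 1" "\<i> * complex_of_real (\<beta> * trunc \<alpha>)"]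
      norm_triangle_ineq4[of "iexp (\<beta> * \<alpha>)" 1] by linarith
  also have "\<dots> \<le> 1 + 1 + \<bar>\<beta>\<bar>"
    using abs_trunc_le1[of \<alpha>] by (simp add: norm_mult abs_mult mult_left_le)
  finally have "cmod (iexp (\<beta> * \<alpha>) - 1 - \<i> * complex_of_real (\<beta> * trunc \<alpha>)) \<le> 2 + \<bar>\<beta>\<bar>"
    by simp
  moreover have "2 + \<bar>\<beta>\<bar> \<le> (\<beta>\<^sup>2/2 + \<bar>\<beta>\<bar> + 2) * ww \<alpha>"
    unfolding w mult_1_right using zero_le_power2[of \<beta>] by linarith
  ultimately show ?thesis by linarith
qed

locale lev_meas =
  fixes lam :: "real measure"
  assumes sets_lam: "sets lam = sets borel"
    and lam0: "emeasure lam {0} = 0"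
    and int_ww: "integrable lam ww"
begin

lemma meas[measurable_dest]: "f \<in> borel_measurable borel \<Longrightarrow> f \<in> borel_measurable lam"
  by (rule meas_lam[OF sets_lam])

lemma lk_integrable:
  "complex_integrable lam (\<lambda>\<alpha>. iexp (\<beta> * \<alpha>) - 1 - \<i> * complex_of_real (\<beta> * trunc \<alpha>))"
proof (rule Bochner_Integration.integrable_bound)
  show "integrable lam (\<lambda>\<alpha>. (\<beta>\<^sup>2/2 + \<bar>\<beta>\<bar> + 2) * ww \<alpha>)"
    using int_ww by auto
  show "(\<lambda>\<alpha>. iexp (\<beta> * \<alpha>) - 1 - \<i> * complex_of_real (\<beta> * trunc \<alpha>)) \<in> borel_measurable lam"
    by (intro meas) measurable
  show "AE \<alpha> in lam. norm (iexp (\<beta> * \<alpha>) - 1 - \<i> * complex_of_real (\<beta> * trunc \<alpha>))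
        \<le> norm ((\<beta>\<^sup>2/2 + \<bar>\<beta>\<bar> + 2) * ww \<alpha>)"
    using lk_bound ww_nonneg by (auto intro!: AE_I2 order_trans[OF lk_bound] simp: abs_mult)
qed

definition "WW = (\<integral>\<alpha>. ww \<alpha> \<partial>lam)"

lemma WW_nonneg: "0 \<le> WW"
  unfolding WW_def by (simp add: ww_nonneg)

lemma lk_int_bound:
  "cmod (CLINT \<alpha>|lam. iexp (\<beta> * \<alpha>) - 1 - \<i> * complex_of_real (\<beta> * trunc \<alpha>)) \<le> (\<beta>\<^sup>2/2 + \<bar>\<beta>\<bar> + 2) * WW"
proof -
  have "cmod (CLINT \<alpha>|lam. iexp (\<beta> * \<alpha>) - 1 - \<i> * complex_of_real (\<beta> * trunc \<alpha>))
     \<le> (\<integral>\<alpha>. (\<beta>\<^sup>2/2 + \<bar>\<beta>\<bar> + 2) * ww \<alpha> \<partial>lam)"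
    by (rule Bochner_Integration.integral_norm_bound_integral[OF lk_integrable _ lk_bound]) (use int_ww in simp)
  also have "\<dots> = (\<beta>\<^sup>2/2 + \<bar>\<beta>\<bar> + 2) * WW" unfolding WW_def by simp
  finally show ?thesis .
qed

lemma psi_bound: "cmod (psi b q lam \<beta>) \<le> \<bar>\<beta>\<bar> * \<bar>b\<bar> + \<bar>q\<bar> * \<beta>\<^sup>2 / 2 + (\<beta>\<^sup>2/2 + \<bar>\<beta>\<bar> + 2) * WW"
proof -
  have "cmod (psi b q lam \<beta>) \<le> cmod (\<i> * complex_of_real (\<beta> * b)) + cmod (complex_of_real (q * \<beta>\<^sup>2 / 2))
     + cmod (CLINT \<alpha>|lam. iexp (\<beta> * \<alpha>) - 1 - \<i> * complex_of_real (\<beta> * trunc \<alpha>))"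
    unfolding psi_def
    using norm_triangle_ineq[of "\<i> * complex_of_real (\<beta> * b) - complex_of_real (q * \<beta>\<^sup>2 / 2)"
       "CLINT \<alpha>|lam. iexp (\<beta> * \<alpha>) - 1 - \<i> * complex_of_real (\<beta> * trunc \<alpha>)"]
      norm_triangle_ineq4[of "\<i> * complex_of_real (\<beta> * b)" "complex_of_real (q * \<beta>\<^sup>2 / 2)"]
    by linarith
  also have "\<dots> \<le> \<bar>\<beta>\<bar> * \<bar>b\<bar> + \<bar>q\<bar> * \<beta>\<^sup>2 / 2 + (\<beta>\<^sup>2/2 + \<bar>\<beta>\<bar> + 2) * WW"
    using lk_int_bound[of \<beta>] by (simp add: norm_mult abs_mult norm_power)
  finally show ?thesis .
qed

lemma psi_zero: "psi b q lam 0 = 0"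
  unfolding psi_def by simp

lemma Re_psi_le: assumes "0 \<le> q" shows "Re (psi b q lam \<beta>) \<le> 0"
proof -
  have "Re (CLINT \<alpha>|lam. iexp (\<beta> * \<alpha>) - 1 - \<i> * complex_of_real (\<beta> * trunc \<alpha>))
     = (\<integral>\<alpha>. Re (iexp (\<beta> * \<alpha>) - 1 - \<i> * complex_of_real (\<beta> * trunc \<alpha>)) \<partial>lam)"
    by (rule integral_Re[symmetric]) (rule lk_integrable)
  also have "\<dots> = (\<integral>\<alpha>. cos (\<beta> * \<alpha>) - 1 \<partial>lam)"
    by (simp add: Re_exp)
  also have "\<dots> = - (\<integral>\<alpha>. 1 - cos (\<beta> * \<alpha>) \<partial>lam)"
    by (subst Bochner_Integration.integral_minus[symmetric]) simp
  also have "\<dots> \<le> 0"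
    by (simp add: Bochner_Integration.integral_nonneg)
  finally have "Re (CLINT \<alpha>|lam. iexp (\<beta> * \<alpha>) - 1 - \<i> * complex_of_real (\<beta> * trunc \<alpha>)) \<le> 0" .
  moreover have "0 \<le> q * \<beta>\<^sup>2" using assms by simp
  ultimately show ?thesis unfolding psi_def by (simp del: of_real_mult)
qed

lemma isCont_psi: "isCont (psi b q lam) \<beta>"
  unfolding continuous_at_sequentially
proof safe
  fix X :: "nat \<Rightarrow> real" assume X: "X \<longlonglongrightarrow> \<beta>"
  then obtain B where B: "\<And>j. norm (X j) \<le> B"
    using convergent_imp_Bseq[OF convergentI[OF X]] unfolding Bseq_def by blast
  have "(\<lambda>j. CLINT \<alpha>|lam. iexp (X j * \<alpha>) - 1 - \<i> * complex_of_real (X j * trunc \<alpha>))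
       \<longlonglongrightarrow> (CLINT \<alpha>|lam. iexp (\<beta> * \<alpha>) - 1 - \<i> * complex_of_real (\<beta> * trunc \<alpha>))"
  proof (rule integral_dominated_convergence[where w="\<lambda>\<alpha>. (B\<^sup>2/2 + B + 2) * ww \<alpha>"])
    show "integrable lam (\<lambda>\<alpha>. (B\<^sup>2/2 + B + 2) * ww \<alpha>)" using int_ww by auto
    show "(\<lambda>\<alpha>. iexp (\<beta> * \<alpha>) - 1 - \<i> * complex_of_real (\<beta> * trunc \<alpha>)) \<in> borel_measurable lam"
      by (intro meas) measurable
    show "(\<lambda>\<alpha>. iexp (X j * \<alpha>) - 1 - \<i> * complex_of_real (X j * trunc \<alpha>)) \<in> borel_measurable lam" for j
      by (intro meas) measurable
    show "AE \<alpha> in lam. (\<lambda>j. iexp (X j * \<alpha>) - 1 - \<i> * complex_of_real (X j * trunc \<alpha>))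
          \<longlonglongrightarrow> iexp (\<beta> * \<alpha>) - 1 - \<i> * complex_of_real (\<beta> * trunc \<alpha>)"
      by (intro AE_I2 tendsto_intros X)
    show "AE \<alpha> in lam. norm (iexp (X j * \<alpha>) - 1 - \<i> * complex_of_real (X j * trunc \<alpha>))
          \<le> (B\<^sup>2/2 + B + 2) * ww \<alpha>" for j
    proof (intro AE_I2 order_trans[OF lk_bound] mult_right_mono ww_nonneg)
      fix \<alpha>
      have "\<bar>X j\<bar> \<le> B" using B[of j] by simp
      moreover have "(X j)\<^sup>2 \<le> B\<^sup>2" using power_mono[OF \<open>\<bar>X j\<bar> \<le> B\<close> abs_ge_zero, of 2] by simp
      ultimately show "(X j)\<^sup>2/2 + \<bar>X j\<bar> + 2 \<le> B\<^sup>2/2 + B + 2" by simp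
    qed
  qed
  then show "(psi b q lam \<circ> X) \<longlonglongrightarrow> psi b q lam \<beta>"
    unfolding psi_def comp_def by (intro tendsto_intros X) auto
qed

end

locale lp =
  fixes M :: "'a measure" and L :: "real \<Rightarrow> 'a \<Rightarrow> real"
  assumes levy: "levy_process M L"
begin

lemma M_prob: "prob_space M" using levy unfolding levy_process_def by blast

sublocale prob_space M by (rule M_prob)

lemma L_meas[measurable]: "0 \<le> t \<Longrightarrow> L t \<in> borel_measurable M"
  using levy unfolding levy_process_def by blast

lemma indep: "0 \<le> u 0 \<Longrightarrow> (\<forall>i<n. u i < u (Suc i)) \<Longrightarrow>
   indep_vars (\<lambda>_. borel) (\<lambda>i \<omega>. L (u (Suc i)) \<omega> - L (u i) \<omega>) {..<n}"
  using levy unfolding levy_process_def by blast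

lemma stat: "0 \<le> s \<Longrightarrow> s \<le> t \<Longrightarrow> distr M borel (\<lambda>\<omega>. L t \<omega> - L s \<omega>) = distr M borel (L (t - s))"
  using levy unfolding levy_process_def by blast

lemma stoch: "0 \<le> t \<Longrightarrow> 0 < e \<Longrightarrow>
  ((\<lambda>h. measure M {\<omega>\<in>space M. e < \<bar>L (t + h) \<omega> - L t \<omega>\<bar>}) \<longlongrightarrow> 0) (at 0 within {-t..})"
  using levy unfolding levy_process_def by blast

definition "mu h = distr M borel (L h)"
definition "phi h \<beta> = char (mu h) \<beta>"

lemma mu_rd: "0 \<le> h \<Longrightarrow> real_distribution (mu h)"
  unfolding mu_def by (intro real_distribution_distr) (simp add: L_meas)

lemma phi_zero_arg: "0 \<le> h \<Longrightarrow> phi h 0 = 1"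
  unfolding phi_def using mu_rd real_distribution.char_zero by blast

lemma phi_as_int:
  assumes "0 \<le> s" "s \<le> t"
  shows "phi (t - s) \<beta> = (CLINT \<omega>|M. iexp (\<beta> * (L t \<omega> - L s \<omega>)))"
proof -
  have "phi (t - s) \<beta> = char (distr M borel (\<lambda>\<omega>. L t \<omega> - L s \<omega>)) \<beta>"
    unfolding phi_def mu_def using stat[OF assms] by simp
  also have "\<dots> = (CLINT \<omega>|M. iexp (\<beta> * (L t \<omega> - L s \<omega>)))"
    unfolding char_def using assms
    by (subst integral_distr) (auto simp del: of_real_mult of_real_diff)
  finally show ?thesis .
qed

lemma phi_zero_time: "phi 0 \<beta> = 1"
  using phi_as_int[of 0 0 \<beta>] by (simp add: prob_space)

lemma phi_prod:
  assumes u0: "0 \<le> u 0" and inc: "\<forall>i<n. u i < u (Suc i)"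
  shows "phi (u n - u 0) \<beta> = (\<Prod>i<n. phi (u (Suc i) - u i) \<beta>)"
proof -
  have mono: "i \<le> n \<Longrightarrow> u 0 \<le> u i" for i
  proof (induction i)
    case (Suc i)
    then have "u i < u (Suc i)" using inc by simp
    with Suc show ?case by simp
  qed simp
  have "phi (u n - u 0) \<beta> = char (distr M borel (\<lambda>\<omega>. L (u n) \<omega> - L (u 0) \<omega>)) \<beta>"
    unfolding phi_def mu_def using stat[of "u 0" "u n"] mono[of n] u0 by simp
  also have "(\<lambda>\<omega>. L (u n) \<omega> - L (u 0) \<omega>) = (\<lambda>\<omega>. \<Sum>i<n. L (u (Suc i)) \<omega> - L (u i) \<omega>)"
    using sum_lessThan_telescope[of "\<lambda>i. L (u i) \<omega>" n for \<omega>] by simp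
  also have "char (distr M borel (\<lambda>\<omega>. \<Sum>i<n. L (u (Suc i)) \<omega> - L (u i) \<omega>)) \<beta>
      = (\<Prod>i<n. char (distr M borel (\<lambda>\<omega>. L (u (Suc i)) \<omega> - L (u i) \<omega>)) \<beta>)"
    by (rule char_distr_sum[OF indep[OF u0 inc]])
  also have "\<dots> = (\<Prod>i<n. phi (u (Suc i) - u i) \<beta>)"
  proof (intro prod.cong refl)
    fix i assume "i \<in> {..<n}"
    then have "0 \<le> u i" "u i \<le> u (Suc i)" using mono[of i] u0 inc by auto
    then show "char (distr M borel (\<lambda>\<omega>. L (u (Suc i)) \<omega> - L (u i) \<omega>)) \<beta> = phi (u (Suc i) - u i) \<beta>"
      unfolding phi_def mu_def by (simp add: stat)
  qed
  finally show ?thesis .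
qed

lemma phi_mult: assumes "0 \<le> h" shows "phi (real n * h) \<beta> = (phi h \<beta>) ^ n"
proof (cases "h = 0")
  case True then show ?thesis by (simp add: phi_zero_time)
next
  case False
  then have h: "0 < h" using assms by simp
  have "phi ((\<lambda>i. real i * h) n - (\<lambda>i. real i * h) 0) \<beta>
     = (\<Prod>i<n. phi ((\<lambda>i. real i * h) (Suc i) - (\<lambda>i. real i * h) i) \<beta>)"
    by (rule phi_prod) (use h in \<open>auto simp: distrib_right\<close>)
  then show ?thesis by (simp add: distrib_right)
qed

lemma phi_add: assumes "0 \<le> a" "0 \<le> b" shows "phi (a + b) \<beta> = phi a \<beta> * phi b \<beta>"
proof (cases "a = 0 \<or> b = 0")
  case True then show ?thesis by (auto simp: phi_zero_time)
next
  case False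
  then have ab: "0 < a" "0 < b" using assms by auto
  define u where "u = (\<lambda>i::nat. if i = 0 then 0 else if i = 1 then a else a + b)"
  have "phi (u 2 - u 0) \<beta> = (\<Prod>i<2. phi (u (Suc i) - u i) \<beta>)"
    by (rule phi_prod) (use ab in \<open>auto simp: u_def less_2_cases_iff\<close>)
  then show ?thesis by (simp add: u_def numeral_2_eq_2 lessThan_Suc)
qed

end

locale lpc = lp M L + lev_meas lam
  for M :: "'a measure" and L and b q :: real and lam +
  assumes chars: "levy_characteristics M L b q lam"
begin

abbreviation "ps \<equiv> psi b q lam"

lemma q_nonneg: "0 \<le> q" using chars unfolding levy_characteristics_def by blast

lemma phi_one: "phi 1 \<beta> = exp (ps \<beta>)"
  using chars unfolding levy_characteristics_def phi_def mu_def psi_def by blast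

lemma phi_root: assumes n: "1 \<le> n" shows "phi (1 / real n) \<beta> = exp (ps \<beta> / of_nat n)"
proof -
  define g where "g = (\<lambda>\<beta>. phi (1 / real n) \<beta> * exp (- ps \<beta> / of_nat n))"
  have cont: "continuous_on UNIV g"
    unfolding g_def phi_def
    by (intro continuous_at_imp_continuous_on ballI continuous_intros
          real_distribution.isCont_char mu_rd isCont_psi) (use n in auto)
  have pw: "g x ^ n = 1" for x
  proof -
    have "phi (1 / real n) x ^ n = phi (real n * (1 / real n)) x"
      by (rule phi_mult[symmetric]) simp
    also have "\<dots> = exp (ps x)" using n by (simp add: phi_one)
    finally have 1: "phi (1 / real n) x ^ n = exp (ps x)" .
    have 2: "exp (- ps x / of_nat n) ^ n = exp (- ps x)"
      using exp_of_nat_mult[of n "- ps x / of_nat n", symmetric] n by simp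
    show ?thesis unfolding g_def power_mult_distrib 1 2 by (simp add: exp_minus)
  qed
  have "finite (g ` UNIV)"
    by (rule finite_subset[OF _ finite_roots_unity[OF n]]) (auto simp: pw)
  then have "g constant_on UNIV"
    by (intro continuous_finite_range_constant cont) auto
  then have "g \<beta> = g 0" unfolding constant_on_def by auto
  also have "g 0 = 1" unfolding g_def using n by (simp add: phi_zero_arg psi_zero)
  finally have "phi (1 / real n) \<beta> * exp (- ps \<beta> / of_nat n) = 1" unfolding g_def .
  then show ?thesis by (simp add: exp_minus field_simps)
qed

lemma phi_rat: assumes n: "1 \<le> n" shows "phi (real k / real n) \<beta> = exp (of_real (real k / real n) * ps \<beta>)"
proof -
  have "phi (real k / real n) \<beta> = phi (real k * (1 / real n)) \<beta>" by simp
  also have "\<dots> = phi (1 / real n) \<beta> ^ k" by (rule phi_mult) simp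
  also have "\<dots> = exp (ps \<beta> / of_nat n) ^ k" by (subst phi_root[OF n]) (rule refl)
  also have "\<dots> = exp (of_nat k * (ps \<beta> / of_nat n))" by (rule exp_of_nat_mult[symmetric])
  finally show ?thesis by (simp add: field_simps)
qed

lemma phi_right_cont:
  assumes pos: "\<And>j. 0 < \<delta> j" and lim: "\<delta> \<longlonglongrightarrow> 0"
  shows "(\<lambda>j. phi (\<delta> j) \<beta>) \<longlonglongrightarrow> 1"
proof -
  define P where "P e j = measure M {\<omega>\<in>space M. e < \<bar>L (\<delta> j) \<omega> - L 0 \<omega>\<bar>}" for e j
  have P_lim: "(\<lambda>j. P e j) \<longlonglongrightarrow> 0" if e: "0 < e" for e
  proof -
    have "((\<lambda>h. measure M {\<omega>\<in>space M. e < \<bar>L (0 + h) \<omega> - L 0 \<omega>\<bar>}) \<longlongrightarrow> 0) (at 0 within {-0..})"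
      by (rule stoch) (use e in auto)
    moreover have "\<delta> j \<in> {-0..} \<and> \<delta> j \<noteq> 0" for j using pos[of j] by auto
    then have "filterlim \<delta> (at 0 within {-0..}) sequentially"
      unfolding filterlim_at using lim by (auto intro!: always_eventually)
    ultimately show ?thesis unfolding P_def by (auto dest: filterlim_compose)
  qed
  have bound: "cmod (phi (\<delta> j) \<beta> - 1) \<le> \<bar>\<beta>\<bar> * e + 2 * P e j" if e: "0 < e" for e j
  proof -
    define Y where "Y \<omega> = L (\<delta> j) \<omega> - L 0 \<omega>" for \<omega>
    have dj: "0 \<le> \<delta> j" using pos[of j] by simp
    have Ym[measurable]: "Y \<in> borel_measurable M" unfolding Y_def using dj by measurable
    have "phi (\<delta> j) \<beta> = (CLINT \<omega>|M. iexp (\<beta> * Y \<omega>))"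
      using phi_as_int[of 0 "\<delta> j" \<beta>] dj unfolding Y_def by simp
    then have "phi (\<delta> j) \<beta> - 1 = (CLINT \<omega>|M. iexp (\<beta> * Y \<omega>) - 1)"
      by (subst Bochner_Integration.integral_diff) (auto simp: prob_space integrable_iexp
           intro!: integrable_const_bound[where B=1] simp del: of_real_mult)
    also have "cmod \<dots> \<le> (LINT \<omega>|M. cmod (iexp (\<beta> * Y \<omega>) - 1))"
      by (rule integral_norm_bound)
    also have "\<dots> \<le> (LINT \<omega>|M. \<bar>\<beta>\<bar> * e + 2 * indicator {\<omega>\<in>space M. e < \<bar>Y \<omega>\<bar>} \<omega>)"
    proof (rule integral_mono)
      show "integrable M (\<lambda>\<omega>. cmod (iexp (\<beta> * Y \<omega>) - 1))"
        by (intro integrable_const_bound[where B=2])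
          (auto intro!: order_trans[OF norm_triangle_ineq4] simp del: of_real_mult)
      show "integrable M (\<lambda>\<omega>. \<bar>\<beta>\<bar> * e + 2 * indicator {\<omega>\<in>space M. e < \<bar>Y \<omega>\<bar>} \<omega>)"
        by (intro Bochner_Integration.integrable_add integrable_mult_right integrable_real_indicator) 
           (auto simp: emeasure_eq_measure)
      fix \<omega> assume "\<omega> \<in> space M"
      show "cmod (iexp (\<beta> * Y \<omega>) - 1) \<le> \<bar>\<beta>\<bar> * e + 2 * indicator {\<omega>\<in>space M. e < \<bar>Y \<omega>\<bar>} \<omega>"
      proof (cases "e < \<bar>Y \<omega>\<bar>")
        case True
        have "cmod (iexp (\<beta> * Y \<omega>) - 1) \<le> 2"
          by (rule order_trans[OF norm_triangle_ineq4]) (simp del: of_real_mult)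
        moreover have "0 \<le> \<bar>\<beta>\<bar> * e" using e by simp
        ultimately show ?thesis using True \<open>\<omega> \<in> space M\<close> by simp
      next
        case False
        have "cmod (iexp (\<beta> * Y \<omega>) - (\<Sum>k \<le> 0. (\<i> * (\<beta> * Y \<omega>))^k / fact k)) \<le> \<bar>\<beta> * Y \<omega>\<bar>^(Suc 0) / fact (Suc 0)"
          by (rule iexp_approx1)
        then have "cmod (iexp (\<beta> * Y \<omega>) - 1) \<le> \<bar>\<beta>\<bar> * \<bar>Y \<omega>\<bar>" by (simp add: abs_mult)
        also have "\<dots> \<le> \<bar>\<beta>\<bar> * e" using False by (intro mult_left_mono) auto
        moreover have "0 \<le> (indicator {\<omega>\<in>space M. e < \<bar>Y \<omega>\<bar>} \<omega> :: real)" by simp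
        ultimately show ?thesis by linarith
      qed
    qed
    also have "\<dots> = \<bar>\<beta>\<bar> * e + 2 * measure M {\<omega>\<in>space M. e < \<bar>Y \<omega>\<bar>}"
    proof -
      have A: "{\<omega>\<in>space M. e < \<bar>Y \<omega>\<bar>} \<in> sets M" by measurable
      show ?thesis
        using A by (subst Bochner_Integration.integral_add)
          (auto simp: prob_space emeasure_eq_measure integrable_real_indicator
            Int_absorb2[OF sets.sets_into_space[OF A]])
    qed
    also have "\<dots> = \<bar>\<beta>\<bar> * e + 2 * P e j" unfolding P_def Y_def ..
    finally show ?thesis .
  qed
  show ?thesis
  proof (rule tendstoI)
    fix \<epsilon> :: real assume \<epsilon>: "0 < \<epsilon>"
    define e where "e = \<epsilon> / (2 * (\<bar>\<beta>\<bar> + 1))"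
    have e: "0 < e" unfolding e_def using \<epsilon> by (simp add: add_pos_nonneg)
    have be: "\<bar>\<beta>\<bar> * e < \<epsilon> / 2"
    proof -
      have "\<bar>\<beta>\<bar> * e = \<epsilon> / 2 * (\<bar>\<beta>\<bar> / (\<bar>\<beta>\<bar> + 1))" unfolding e_def by (simp add: field_simps)
      also have "\<dots> < \<epsilon> / 2 * 1" using \<epsilon> by (intro mult_strict_left_mono) auto
      finally show ?thesis by simp
    qed
    have "eventually (\<lambda>j. P e j < \<epsilon> / 4) sequentially"
      using order_tendstoD(2)[OF P_lim[OF e], of "\<epsilon> / 4"] \<epsilon> by linarith
    then show "eventually (\<lambda>j. dist (phi (\<delta> j) \<beta>) 1 < \<epsilon>) sequentially"
    proof eventually_elim
      case (elim j)
      then show ?case using bound[OF e, of j] be by (simp add: dist_norm)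
    qed
  qed
qed

lemma phi_exp: assumes h: "0 \<le> h" shows "phi h \<beta> = exp (of_real h * ps \<beta>)"
proof (cases "h = 0")
  case True then show ?thesis by (simp add: phi_zero_time)
next
  case False
  then have h: "0 < h" using h by simp
  define c where "c j = \<lceil>real (Suc j) * h\<rceil> - 1" for j
  define r where "r j = real (nat (c j)) / real (Suc j)" for j
  have c: "real_of_int (c j) < real (Suc j) * h" "real (Suc j) * h - 1 \<le> real_of_int (c j)" "0 \<le> c j" for j
  proof -
    show "real_of_int (c j) < real (Suc j) * h" "real (Suc j) * h - 1 \<le> real_of_int (c j)"
      unfolding c_def using ceiling_correct[of "real (Suc j) * h"] by auto
    have "0 < real (Suc j) * h" using h by simp
    then show "0 \<le> c j" unfolding c_def by simp
  qed
  have r: "0 \<le> r j" "r j < h" "h - 1 / real (Suc j) \<le> r j" for j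
  proof -
    have rj: "r j = real_of_int (c j) / real (Suc j)" unfolding r_def using c(3)[of j] by simp
    show "0 \<le> r j" unfolding rj using c(3)[of j] by simp
    show "r j < h" unfolding rj using c(1)[of j] by (simp add: divide_less_eq mult.commute)
    have "h - 1 / real (Suc j) = (real (Suc j) * h - 1) / real (Suc j)" by (simp add: field_simps)
    also have "\<dots> \<le> real_of_int (c j) / real (Suc j)" using c(2)[of j] by (intro divide_right_mono) auto
    finally show "h - 1 / real (Suc j) \<le> r j" unfolding rj .
  qed
  have d_lim: "(\<lambda>j. h - r j) \<longlonglongrightarrow> 0"
  proof (rule tendsto_sandwich[of "\<lambda>_. 0" _ _ "\<lambda>j. 1 / real (Suc j)"])
    show "eventually (\<lambda>j. 0 \<le> h - r j) sequentially" by (auto intro!: always_eventually simp: less_imp_le[OF r(2)])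
    show "eventually (\<lambda>j. h - r j \<le> 1 / real (Suc j)) sequentially" using r(3) by (auto simp: algebra_simps)
    show "(\<lambda>j. 1 / real (Suc j)) \<longlonglongrightarrow> 0" using LIMSEQ_inverse_real_of_nat by (simp add: inverse_eq_divide)
  qed simp
  have r_lim: "r \<longlonglongrightarrow> h"
    using tendsto_diff[OF tendsto_const[of h] d_lim] by simp
  have eq: "phi h \<beta> = exp (of_real (r j) * ps \<beta>) * phi (h - r j) \<beta>" for j
  proof -
    have "phi h \<beta> = phi (r j + (h - r j)) \<beta>" by simp
    also have "\<dots> = phi (r j) \<beta> * phi (h - r j) \<beta>" using r[of j] by (intro phi_add) auto
    also have "phi (r j) \<beta> = exp (of_real (r j) * ps \<beta>)" unfolding r_def by (rule phi_rat) simp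
    finally show ?thesis .
  qed
  have "(\<lambda>j. exp (of_real (r j) * ps \<beta>) * phi (h - r j) \<beta>) \<longlonglongrightarrow> exp (of_real h * ps \<beta>) * 1"
    by (intro tendsto_intros r_lim phi_right_cont d_lim) (use r in auto)
  then have "(\<lambda>j. phi h \<beta>) \<longlonglongrightarrow> exp (of_real h * ps \<beta>)" unfolding eq[symmetric] by simp
  then show ?thesis by (rule LIMSEQ_const_iff[THEN iffD1])
qed

end

lemma levy_kernel_int_u:
  fixes u x :: real
  assumes "u > 0" "x \<noteq> 0"
  shows "(CLBINT t:{-u..u}. 1 - iexp (t * x)) = 2 * (u  - sin (u * x) / x)"
proof -
  have "(CLBINT t:{-u..u}. 1 - iexp (t * x)) = (CLBINT t=-u..u. 1 - iexp (t * x))"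
    using assms by (subst interval_integral_Icc, auto)
  also have "\<dots> = (CLBINT t=-u..ereal 0. 1 - iexp (t * x)) + (CLBINT t= ereal 0..u. 1 - iexp (t * x))"
    using \<open>u > 0\<close>
    by (subst interval_integral_sum; force simp add: interval_integrable_isCont)
  also have "\<dots> = (CLBINT t=ereal 0..u. 1 - iexp (t * -x)) + (CLBINT t=ereal 0..u. 1 - iexp (t * x))"
    by (subst interval_integral_reflect, auto)
  also have "... = CLBINT xa=ereal 0..ereal u. 1 - iexp (xa * - x) + (1 - iexp (xa * x))"
    by (subst interval_lebesgue_integral_add (2) [symmetric]) (auto simp: interval_integrable_isCont)
  also have "\<dots> = (LBINT t=ereal 0..u. 2 - 2 * cos (t * x))"
    unfolding exp_Euler cos_of_real by (simp flip: interval_lebesgue_integral_of_real)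
  also have "\<dots> = 2 * u - 2 * sin (u * x) / x"
    using assms by (subst interval_lebesgue_integral_diff)
       (auto intro!: interval_integrable_isCont
             simp: interval_lebesgue_integral_of_real integral_cos [OF \<open>x \<noteq> 0\<close>] mult.commute[of _ x])
  finally show "(CLBINT t:{-u..u}. 1 - iexp (t * x)) = 2 * (u  - sin (u * x) / x)"
    by (simp add: field_simps)
qed

lemma levy_kernel_int:
  assumes "x \<noteq> 0"
  shows "(CLBINT t:{-1..1}. 1 - iexp (t * x)) = 2 * (1 - sin x / x)"
  using levy_kernel_int_u[of 1 x] assms by simp

lemma fubini_Icc:
  fixes F :: "real \<Rightarrow> real \<Rightarrow> complex"
  assumes N: "finite_measure N" "sets N = sets borel"
    and Fm: "(\<lambda>p. F (fst p) (snd p)) \<in> borel_measurable (borel \<Otimes>\<^sub>M borel)"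
    and B: "\<And>x u. u \<in> {-1..1} \<Longrightarrow> norm (F x u) \<le> B"
  shows "(CLBINT u:{-1..1}. (CLINT x|N. F x u)) = (CLINT x|N. (CLBINT u:{-1..1}. F x u))"
proof -
  interpret N: finite_measure N by fact
  interpret P: pair_sigma_finite N lborel ..
  have sp: "space N = UNIV" using sets_eq_imp_space_eq[OF N(2)] by simp
  have sets_eq: "sets (N \<Otimes>\<^sub>M lborel) = sets (borel \<Otimes>\<^sub>M borel)"
    by (intro sets_pair_measure_cong N(2)) simp
  have Fm': "(\<lambda>p. F (fst p) (snd p)) \<in> borel_measurable (N \<Otimes>\<^sub>M lborel)"
    using Fm measurable_cong_sets[OF sets_eq refl] by blast
  have int0: "integrable (N \<Otimes>\<^sub>M lborel) (\<lambda>p. indicator (space N \<times> {-1..1}) p *\<^sub>R F (fst p) (snd p))"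
  proof (rule integrableI_bounded_set_indicator[where B=B])
    show "space N \<times> {-1..1::real} \<in> sets (N \<Otimes>\<^sub>M lborel)" by (intro pair_measureI) (auto intro!: borel_closed closed_atLeastAtMost)
    show "(\<lambda>p. F (fst p) (snd p)) \<in> borel_measurable (N \<Otimes>\<^sub>M lborel)" by (rule Fm')
    show "emeasure (N \<Otimes>\<^sub>M lborel) (space N \<times> {-1..1::real}) < \<infinity>"
      by (subst lborel.emeasure_pair_measure_Times) (auto simp: ennreal_mult_less_top N.emeasure_finite less_top[symmetric] ennreal_mult_eq_top_iff intro!: borel_closed closed_atLeastAtMost)
    show "AE x in N \<Otimes>\<^sub>M lborel. x \<in> space N \<times> {-1..1::real} \<longrightarrow> norm (F (fst x) (snd x)) \<le> B"
      using B by (auto intro!: AE_I2)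
  qed
  have int: "integrable (N \<Otimes>\<^sub>M lborel) (\<lambda>(x, u). indicator (space N \<times> {-1..1}) (x, u) *\<^sub>R F x u)"
    using int0 by (simp add: case_prod_beta')
  have "(CLBINT u:{-1..1}. (CLINT x|N. F x u)) = (\<integral>u. (\<integral>x. indicator (space N \<times> {-1..1}) (x, u) *\<^sub>R F x u \<partial>N) \<partial>lborel)"
    unfolding set_lebesgue_integral_def
    by (intro Bochner_Integration.integral_cong refl) (auto simp: sp split: split_indicator)
  also have "\<dots> = (\<integral>x. (\<integral>u. indicator (space N \<times> {-1..1}) (x, u) *\<^sub>R F x u \<partial>lborel) \<partial>N)"
    using P.Fubini_integral[OF int] by simp
  also have "\<dots> = (CLINT x|N. (CLBINT u:{-1..1}. F x u))"
    unfolding set_lebesgue_integral_def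
    by (intro Bochner_Integration.integral_cong refl) (auto simp: sp split: split_indicator)
  finally show ?thesis .
qed

lemma kernel_char:
  assumes P: "real_distribution P"
  shows "(CLBINT u:{-1..1}. char P v - char P (v + u)) = 2 * (CLINT x|P. complex_of_real (kk x) * iexp (v * x))"
proof -
  interpret P: real_distribution P by fact
  have ii: "complex_integrable P (\<lambda>x. iexp (t * x))" for t
    by (rule P.integrable_const_bound[where B=1]) auto
  have "(CLBINT u:{-1..1}. char P v - char P (v + u)) = (CLBINT u:{-1..1}. (CLINT x|P. iexp (v * x) - iexp ((v + u) * x)))"
    unfolding char_def by (intro set_lebesgue_integral_cong) (auto simp: ii simp del: of_real_mult)
  also have "\<dots> = (CLINT x|P. (CLBINT u:{-1..1}. iexp (v * x) - iexp ((v + u) * x)))"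
  proof (rule fubini_Icc[where B=2])
    show "finite_measure P" by (rule P.finite_measure_axioms)
    show "sets P = sets borel" by simp
    show "(\<lambda>p. iexp (v * fst p) - iexp ((v + snd p) * fst p)) \<in> borel_measurable (borel \<Otimes>\<^sub>M borel)"
      by measurable
    show "norm (iexp (v * x) - iexp ((v + u) * x)) \<le> 2" for x u
      by (rule order_trans[OF norm_triangle_ineq4]) (simp del: of_real_mult)
  qed
  also have "\<dots> = (CLINT x|P. complex_of_real (2 * kk x) * iexp (v * x))"
  proof (intro Bochner_Integration.integral_cong refl)
    fix x
    have "(CLBINT u:{-1..1}. iexp (v * x) - iexp ((v + u) * x)) = (CLBINT u:{-1..1}. iexp (v * x) * (1 - iexp (u * x)))"
      by (intro set_lebesgue_integral_cong) (auto simp: distrib_right exp_add algebra_simps simp del: of_real_mult)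
    also have "\<dots> = iexp (v * x) * (CLBINT u:{-1..1}. 1 - iexp (u * x))"
      by (rule set_integral_mult_right)
    also have "\<dots> = complex_of_real (2 * kk x) * iexp (v * x)"
    proof (cases "x = 0")
      case True then show ?thesis by (simp add: kk_def)
    next
      case False then show ?thesis by (simp add: levy_kernel_int kk_def del: of_real_mult)
    qed
    finally show "(CLBINT u:{-1..1}. iexp (v * x) - iexp ((v + u) * x)) = complex_of_real (2 * kk x) * iexp (v * x)" .
  qed
  also have "\<dots> = 2 * (CLINT x|P. complex_of_real (kk x) * iexp (v * x))"
  proof -
    have "(\<lambda>x. complex_of_real (2 * kk x) * iexp (v * x)) = (\<lambda>x. 2 * (complex_of_real (kk x) * iexp (v * x)))"
      by (auto simp: fun_eq_iff)
    then show ?thesis by (simp only:) (rule Bochner_Integration.integral_mult_right_zero)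
  qed
  finally show ?thesis .
qed

lemma norm_exp_sub1: assumes "Re z \<le> 0" shows "cmod (exp z - 1) \<le> 2 * cmod z"
proof -
  define a where "a = Re z"
  define c where "c = Im z"
  have z: "z = complex_of_real a + \<i> * complex_of_real c" unfolding a_def c_def by (simp add: complex_eq_iff)
  have "exp z - 1 = exp (complex_of_real a) * (iexp c - 1) + (exp (complex_of_real a) - 1)"
    unfolding z by (simp add: exp_add algebra_simps)
  also have "cmod \<dots> \<le> cmod (exp (complex_of_real a) * (iexp c - 1)) + cmod (exp (complex_of_real a) - 1)"
    by (rule norm_triangle_ineq)
  also have "cmod (exp (complex_of_real a) * (iexp c - 1)) \<le> 1 * \<bar>c\<bar>"
  proof -
    have "cmod (iexp c - (\<Sum>k \<le> 0. (\<i> * c)^k / fact k)) \<le> \<bar>c\<bar>^(Suc 0) / fact (Suc 0)"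
      by (rule iexp_approx1)
    then have "cmod (iexp c - 1) \<le> \<bar>c\<bar>" by simp
    moreover have "cmod (exp (complex_of_real a)) \<le> 1" using assms unfolding a_def by simp
    ultimately show ?thesis unfolding norm_mult by (intro mult_mono) auto
  qed
  also have "cmod (exp (complex_of_real a) - 1) = 1 - exp a"
  proof -
    have e: "exp (complex_of_real a) - 1 = complex_of_real (exp a - 1)" by (simp add: exp_of_real)
    have "exp a \<le> 1" using assms unfolding a_def by simp
    then show ?thesis unfolding e norm_of_real by simp
  qed
  also have "1 - exp a \<le> - a" using exp_ge_add_one_self[of a] by linarith
  finally have "cmod (exp z - 1) \<le> \<bar>c\<bar> + \<bar>a\<bar>" by simp
  moreover have "\<bar>c\<bar> \<le> cmod z" "\<bar>a\<bar> \<le> cmod z" unfolding a_def c_def by (simp_all add: abs_Im_le_cmod abs_Re_le_cmod)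
  ultimately show ?thesis by simp
qed

lemma exp_deriv_lim:
  fixes z :: complex
  assumes h: "h \<longlonglongrightarrow> 0" "\<And>n. h n \<noteq> 0"
  shows "(\<lambda>n. (exp (complex_of_real (h n) * z) - 1) / complex_of_real (h n)) \<longlonglongrightarrow> z"
proof -
  have "((\<lambda>w. exp (w * z)) has_field_derivative z) (at 0)"
    by (auto intro!: derivative_eq_intros)
  then have lim: "((\<lambda>w. (exp (w * z) - 1) / w) \<longlongrightarrow> z) (at 0)"
    unfolding has_field_derivative_iff by simp
  have "filterlim (\<lambda>n. complex_of_real (h n)) (at 0) sequentially"
    unfolding filterlim_at using h by (auto intro!: always_eventually tendsto_of_real[where 'a=complex, of h 0, simplified])
  from filterlim_compose[OF lim this] show ?thesis by simp
qed

definition ga :: "real \<Rightarrow> real" where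
  "ga x = (if x = 0 then 0 else (trunc x - sin x) / kk x)"

definition gb :: "real \<Rightarrow> real" where
  "gb x = (if x = 0 then 6 else (trunc x)\<^sup>2 / kk x)"

lemma kk_ga: "kk x * ga x = trunc x - sin x"
proof (cases "x = 0")
  case True then show ?thesis by (simp add: ga_def kk_def trunc_def)
next
  case False then show ?thesis using kk_pos[OF False] by (simp add: ga_def)
qed

lemma kk_gb: "kk x * gb x = (trunc x)\<^sup>2"
proof (cases "x = 0")
  case True then show ?thesis by (simp add: gb_def kk_def trunc_def)
next
  case False then show ?thesis using kk_pos[OF False] by (simp add: gb_def)
qed

lemma kk_alt: "x \<noteq> 0 \<Longrightarrow> kk x = (x - sin x) / x"
  by (simp add: kk_def field_simps)

lemma ga_small: assumes "\<bar>x\<bar> \<le> 1" shows "ga x = x"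
proof (cases "x = 0")
  case True then show ?thesis by (simp add: ga_def)
next
  case False
  have "kk x \<noteq> 0" using kk_pos[OF False] by simp
  then have "x - sin x \<noteq> 0" using kk_alt[OF False] by auto
  moreover have "trunc x = x" using assms by (simp add: trunc_def)
  ultimately show ?thesis using False by (simp add: ga_def kk_alt)
qed

lemma ga_bound: "\<bar>ga x\<bar> \<le> 15"
proof (cases "\<bar>x\<bar> \<le> 1")
  case True then show ?thesis by (simp add: ga_small)
next
  case False
  then have x0: "x \<noteq> 0" by auto
  have w: "ww x = 1" using False unfolding ww_def by (simp add: abs_le_square_iff[of x 1, simplified])
  have k: "2/15 \<le> kk x" using kk_ge[of x] w by simp
  have n: "\<bar>trunc x - sin x\<bar> \<le> 2" using abs_trunc_le1[of x] abs_sin_le_one[of x] by linarith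
  have "\<bar>ga x\<bar> = \<bar>trunc x - sin x\<bar> / kk x" using x0 kk_pos[OF x0] by (simp add: ga_def)
  also have "\<dots> \<le> 2 / (2/15)" using n k by (intro frac_le) auto
  finally show ?thesis by simp
qed

lemma gb_bound: "\<bar>gb x\<bar> \<le> 8"
proof (cases "x = 0")
  case True then show ?thesis by (simp add: gb_def)
next
  case False
  have "\<bar>gb x\<bar> = ww x / kk x" using False kk_pos[OF False] by (simp add: gb_def trunc_sq ww_nonneg)
  also have "\<dots> \<le> ww x / ((2/15) * ww x)" using kk_ge[of x] ww_pos[OF False] by (intro divide_left_mono) auto
  also have "\<dots> = 15/2" using ww_pos[OF False] by simp
  finally show ?thesis by simp
qed

lemma kk_near0_pos:
  fixes y :: real assumes "0 < y" "y \<le> 1"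
  shows "\<bar>y\<^sup>2 - 6 * kk y\<bar> \<le> y^3 / 4"
proof -
  have k: "kk y = 1 - sin y / y" using assms by (simp add: kk_def)
  have l: "sin y \<ge> y - y^3/6 - y^4/24" by (rule sin_lower4)
  have "(1 - y^2/6 - y^3/24) * y = y - y^3/6 - y^4/24"
    by (simp add: field_simps power2_eq_square power3_eq_cube power4_eq_xxxx)
  then have l': "sin y / y \<ge> 1 - y^2/6 - y^3/24" using l assms by (simp add: le_divide_eq)
  have u: "sin y \<le> y - y^3/6 + y^5/120" using assms by (intro sin_upper5) auto
  have "(1 - y^2/6 + y^4/120) * y = y - y^3/6 + y^5/120"
    by (simp add: field_simps power2_eq_square power3_eq_cube power4_eq_xxxx numeral_eq_Suc)
  then have u': "sin y / y \<le> 1 - y^2/6 + y^4/120" using u assms by (simp add: divide_le_eq)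
  have y4: "y^4 \<le> y^3" using assms by (simp add: power_decreasing)
  have "0 \<le> y^3" using assms by simp
  have e: "y\<^sup>2 - 6 * kk y = y\<^sup>2 - 6 + 6 * (sin y / y)" unfolding k by (simp add: algebra_simps)
  have a1: "y\<^sup>2 - 6 + 6 * (sin y / y) \<le> y^3 / 4" using l' u' y4 \<open>0 \<le> y^3\<close> by linarith
  have a2: "- (y\<^sup>2 - 6 + 6 * (sin y / y)) \<le> y^3 / 4" using l' u' y4 \<open>0 \<le> y^3\<close> by linarith
  show ?thesis unfolding e abs_le_iff using a1 a2 by (rule conjI)
qed

lemma kk_near0:
  fixes y :: real assumes "\<bar>y\<bar> \<le> 1"
  shows "\<bar>y\<^sup>2 - 6 * kk y\<bar> \<le> \<bar>y\<bar>^3 / 4"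
proof -
  consider "y = 0" | "y > 0" | "y < 0" by linarith
  then show ?thesis
  proof cases
    case 1 then show ?thesis by (simp add: kk_def)
  next
    case 2 then show ?thesis using kk_near0_pos[of y] assms by simp
  next
    case 3 then show ?thesis using kk_near0_pos[of "-y"] assms by (simp add: kk_even)
  qed
qed

lemma gb_near0: assumes "\<bar>y\<bar> \<le> 1" shows "\<bar>gb y - 6\<bar> \<le> 2 * \<bar>y\<bar>"
proof (cases "y = 0")
  case True then show ?thesis by (simp add: gb_def)
next
  case False
  have kp: "0 < kk y" by (rule kk_pos[OF False])
  have w: "ww y = y\<^sup>2" using assms unfolding ww_def by (simp add: abs_le_square_iff[of y 1, simplified])
  have t: "(trunc y)\<^sup>2 = y\<^sup>2" using trunc_sq[of y] w by simp
  have "gb y - 6 = (y\<^sup>2 - 6 * kk y) / kk y" using kp False by (simp add: gb_def t field_simps)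
  then have "\<bar>gb y - 6\<bar> = \<bar>y\<^sup>2 - 6 * kk y\<bar> / kk y" using kp by simp
  also have "\<dots> \<le> (\<bar>y\<bar>^3 / 4) / ((2/15) * y\<^sup>2)"
    using kk_near0[OF assms] kk_ge[of y] w False by (intro frac_le) auto
  also have "\<dots> = (15/8) * \<bar>y\<bar>" using False by (simp add: power2_eq_square power3_eq_cube field_simps)
  also have "\<dots> \<le> 2 * \<bar>y\<bar>" by simp
  finally show ?thesis .
qed

lemma isCont_kk_nz: "x \<noteq> 0 \<Longrightarrow> isCont kk x"
proof -
  assume x: "x \<noteq> 0"
  have "eventually (\<lambda>y. kk y = 1 - sin y / y) (nhds x)"
    using t1_space_nhds[OF x] by eventually_elim (simp add: kk_def)
  moreover have "isCont (\<lambda>y. 1 - sin y / y) x" using x by (intro continuous_intros) auto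
  ultimately show ?thesis using isCont_cong[of kk "\<lambda>y. 1 - sin y / y" x] by simp
qed

lemma isCont_ga: "isCont ga x"
proof (cases "x = 0")
  case True
  have "eventually (\<lambda>y. ga y = y) (nhds x)"
  proof -
    have "eventually (\<lambda>y. y \<in> ball 0 1) (nhds x)" using True by (intro eventually_nhds_in_open) auto
    then show ?thesis by eventually_elim (simp add: ga_small dist_norm)
  qed
  then show ?thesis using isCont_cong[of ga "\<lambda>y. y" x] by simp
next
  case False
  have "eventually (\<lambda>y. ga y = (trunc y - sin y) / kk y) (nhds x)"
    using t1_space_nhds[OF False] by eventually_elim (simp add: ga_def)
  moreover have "isCont (\<lambda>y. (trunc y - sin y) / kk y) x"
    using False kk_pos[OF False] by (intro continuous_intros isCont_kk_nz isCont_trunc) auto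
  ultimately show ?thesis using isCont_cong[of ga "\<lambda>y. (trunc y - sin y) / kk y" x] by simp
qed

lemma isCont_gb: "isCont gb x"
proof (cases "x = 0")
  case True
  have "((\<lambda>y. gb y - 6) \<longlongrightarrow> 0) (nhds 0)"
  proof (rule Lim_null_comparison)
    have "eventually (\<lambda>y. y \<in> ball 0 1) (nhds 0)" by (intro eventually_nhds_in_open) auto
    then show "eventually (\<lambda>y. norm (gb y - 6) \<le> 2 * \<bar>y\<bar>) (nhds 0)"
      by eventually_elim (simp add: gb_near0 dist_norm)
    show "((\<lambda>y. 2 * \<bar>y\<bar>) \<longlongrightarrow> 0) (nhds (0::real))"
      using tendsto_mult_right_zero[OF tendsto_rabs_zero[OF filterlim_ident[of "nhds (0::real)"]], of 2] by simp
  qed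
  then have "(gb \<longlongrightarrow> 6) (nhds 0)"
    using tendsto_add[OF _ tendsto_const[of 6]] by fastforce
  then show ?thesis using True tendsto_at_iff_tendsto_nhds[of gb 0] by (simp add: isCont_def gb_def)
next
  case False
  have "eventually (\<lambda>y. gb y = (trunc y)\<^sup>2 / kk y) (nhds x)"
    using t1_space_nhds[OF False] by eventually_elim (simp add: gb_def)
  moreover have "isCont (\<lambda>y. (trunc y)\<^sup>2 / kk y) x"
    using False kk_pos[OF False] by (intro continuous_intros isCont_kk_nz isCont_trunc) auto
  ultimately show ?thesis using isCont_cong[of gb "\<lambda>y. (trunc y)\<^sup>2 / kk y" x] by simp
qed

definition addpt :: "real measure \<Rightarrow> real \<Rightarrow> real measure" where
  "addpt A a = measure_of UNIV (sets borel) (\<lambda>X. emeasure A X + ennreal a * emeasure (return borel 0) X)"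

lemma sets_addpt[simp, measurable_cong]: "sets (addpt A a) = sets borel"
  unfolding addpt_def using sets.sigma_sets_eq[of borel] by (subst sets_measure_of) auto

lemma space_addpt[simp]: "space (addpt A a) = UNIV"
  using sets_eq_imp_space_eq[OF sets_addpt[of A a]] by simp

lemma emeasure_addpt:
  assumes A: "sets A = sets borel" and X: "X \<in> sets borel"
  shows "emeasure (addpt A a) X = emeasure A X + ennreal a * indicator X 0"
proof -
  have "emeasure (addpt A a) X = emeasure A X + ennreal a * emeasure (return borel 0) X"
    unfolding addpt_def
  proof (rule emeasure_measure_of_sigma[OF _ _ _ X])
    show "sigma_algebra UNIV (sets borel)" using sets.sigma_algebra_axioms[of borel] by simp
    show "positive (sets borel) (\<lambda>X. emeasure A X + ennreal a * emeasure (return borel 0) X)"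
      unfolding positive_def by simp
    show "countably_additive (sets borel) (\<lambda>X. emeasure A X + ennreal a * emeasure (return borel 0) X)"
      unfolding countably_additive_def
    proof safe
      fix F :: "nat \<Rightarrow> real set"
      assume F: "range F \<subseteq> sets borel" "disjoint_family F"
      have FA: "range F \<subseteq> sets A" using F A by simp
      have FR: "range F \<subseteq> sets (return borel (0::real))" using F by simp
      show "(\<Sum>i. emeasure A (F i) + ennreal a * emeasure (return borel 0) (F i))
          = emeasure A (\<Union> (range F)) + ennreal a * emeasure (return borel 0) (\<Union> (range F))"
        by (subst suminf_add[symmetric]) (auto intro: summableI simp: suminf_emeasure[OF FA F(2)] suminf_emeasure[OF FR F(2)])
    qed
  qed
  then show ?thesis using X by simp
qed

lemma finite_addpt:
  assumes A: "finite_measure A" "sets A = sets borel"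
  shows "finite_measure (addpt A a)"
proof
  interpret A: finite_measure A by fact
  have "emeasure (addpt A a) (space (addpt A a)) = emeasure A UNIV + ennreal a"
    using emeasure_addpt[OF A(2), of UNIV a] by simp
  also have "\<dots> \<noteq> \<infinity>" using A.emeasure_finite[of UNIV] by (simp add: ennreal_mult_eq_top_iff)
  finally show "emeasure (addpt A a) (space (addpt A a)) \<noteq> \<infinity>" .
qed

lemma integral_addpt:
  fixes f :: "real \<Rightarrow> 'b::{banach, second_countable_topology}"
  assumes A: "finite_measure A" "sets A = sets borel" "emeasure A {0} = 0" and a: "0 \<le> a"
    and f: "f \<in> borel_measurable borel" "\<And>x. norm (f x) \<le> B"
  shows "integral\<^sup>L (addpt A a) f = integral\<^sup>L A f + a *\<^sub>R f 0"
proof -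
  let ?R = "addpt A a"
  interpret R: finite_measure ?R by (rule finite_addpt[OF A(1,2)])
  have mc: "-{0::real} \<in> sets borel" "{0::real} \<in> sets borel"
    by (rule borel_open, simp add: open_Compl) (rule borel_closed, simp)
  have d1: "density ?R (\<lambda>x. ennreal (indicator (-{0}) x)) = A"
  proof (rule measure_eqI)
    show "sets (density ?R (\<lambda>x. ennreal (indicator (-{0}) x))) = sets A" using A by simp
    fix X assume "X \<in> sets (density ?R (\<lambda>x. ennreal (indicator (-{0}) x)))"
    then have X: "X \<in> sets borel" by simp
    have "emeasure (density ?R (\<lambda>x. ennreal (indicator (-{0}) x))) X = emeasure ?R (-{0} \<inter> X)"
      unfolding ennreal_indicator by (rule emeasure_restricted) (use X mc in auto)
    also have "\<dots> = emeasure A (-{0} \<inter> X)" using A(2) X mc by (subst emeasure_addpt) auto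
    also have "-{0} \<inter> X = X - {0}" by auto
    also have "emeasure A (X - {0}) = emeasure A X"
      by (rule emeasure_Diff_null_set) (use A X in \<open>auto simp: null_sets_def\<close>)
    finally show "emeasure (density ?R (\<lambda>x. ennreal (indicator (-{0}) x))) X = emeasure A X" .
  qed
  have d2: "density ?R (\<lambda>x. ennreal (indicator {0} x)) = density (return borel 0) (\<lambda>_. ennreal a)"
  proof (rule measure_eqI)
    show "sets (density ?R (\<lambda>x. ennreal (indicator {0} x))) = sets (density (return borel 0) (\<lambda>_. ennreal a))"
      by simp
    fix X assume "X \<in> sets (density ?R (\<lambda>x. ennreal (indicator {0} x)))"
    then have X: "X \<in> sets borel" by simp
    have "emeasure (density ?R (\<lambda>x. ennreal (indicator {0} x))) X = emeasure ?R ({0} \<inter> X)"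
      unfolding ennreal_indicator by (rule emeasure_restricted) (use X mc in auto)
    also have "\<dots> = emeasure A ({0} \<inter> X) + ennreal a * indicator X 0"
      using A(2) X mc by (subst emeasure_addpt) (auto split: split_indicator)
    also have "emeasure A ({0} \<inter> X) = 0"
    proof -
      have "emeasure A ({0} \<inter> X) \<le> emeasure A {0}" using A(2) X mc by (intro emeasure_mono) auto
      then show ?thesis using A(3) by simp
    qed
    also have "0 + ennreal a * indicator X 0 = emeasure (density (return borel 0) (\<lambda>_. ennreal a)) X"
      using X by (simp add: emeasure_density_const)
    finally show "emeasure (density ?R (\<lambda>x. ennreal (indicator {0} x))) X
        = emeasure (density (return borel 0) (\<lambda>_. ennreal a)) X" .
  qed
  have intR: "integrable ?R f"
    by (rule R.integrable_const_bound[where B=B]) (use f in auto)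
  have "integral\<^sup>L ?R f = integral\<^sup>L ?R (\<lambda>x. indicator (-{0}) x *\<^sub>R f x + indicator {0} x *\<^sub>R f x)"
    by (intro Bochner_Integration.integral_cong) (auto split: split_indicator)
  also have "\<dots> = integral\<^sup>L ?R (\<lambda>x. indicator (-{0}) x *\<^sub>R f x) + integral\<^sup>L ?R (\<lambda>x. indicator {0} x *\<^sub>R f x)"
    by (intro Bochner_Integration.integral_add integrable_mult_indicator intR) (use mc in auto)
  also have "integral\<^sup>L ?R (\<lambda>x. indicator (-{0}) x *\<^sub>R f x) = integral\<^sup>L (density ?R (\<lambda>x. ennreal (indicator (-{0}) x))) f"
    by (rule integral_density[symmetric]) (use f mc in auto)
  also have "\<dots> = integral\<^sup>L A f" by (simp only: d1)
  also have "integral\<^sup>L ?R (\<lambda>x. indicator {0} x *\<^sub>R f x) = integral\<^sup>L (density ?R (\<lambda>x. ennreal (indicator {0} x))) f"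
    by (rule integral_density[symmetric]) (use f mc in auto)
  also have "\<dots> = integral\<^sup>L (density (return borel 0) (\<lambda>_. ennreal a)) f" by (simp only: d2)
  also have "\<dots> = (\<integral>x. a *\<^sub>R f x \<partial>return borel 0)"
    by (rule integral_density) (use f a in auto)
  also have "\<dots> = a *\<^sub>R f 0"
    by (rule integral_return) (use f in auto)
  finally show ?thesis .
qed

lemma char_zero_measure: "char R 0 = complex_of_real (measure R (space R))"
  by (simp add: char_def scaleR_conv_of_real)

lemma int_bound_finite:
  fixes g :: "real \<Rightarrow> real"
  assumes N: "finite_measure N" "sets N = sets borel" and g: "g \<in> borel_measurable borel" "\<And>x. \<bar>g x\<bar> \<le> B"
  shows "\<bar>integral\<^sup>L N g\<bar> \<le> B * measure N (space N)"
proof -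
  interpret N: finite_measure N by fact
  have ig: "integrable N g" by (rule N.integrable_const_bound[where B=B]) (use g N(2) in auto)
  have "\<bar>integral\<^sup>L N g\<bar> \<le> (\<integral>x. B \<partial>N)"
    using Bochner_Integration.integral_norm_bound_integral[OF ig, of "\<lambda>_. B"] g N(2) by auto
  also have "\<dots> = B * measure N (space N)" by simp
  finally show ?thesis .
qed

lemma char_density_const:
  assumes "0 \<le> r" "sets R = sets borel"
  shows "char (density R (\<lambda>_. ennreal r)) v = complex_of_real r * char R v"
  unfolding char_def using assms
  by (subst integral_density) (auto simp: scaleR_conv_of_real Bochner_Integration.integral_mult_right_zero)

lemma integral_density_const:
  fixes g :: "real \<Rightarrow> real"
  assumes "0 \<le> r" "sets R = sets borel" "g \<in> borel_measurable borel"
  shows "integral\<^sup>L (density R (\<lambda>_. ennreal r)) g = r * integral\<^sup>L R g"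
  using assms by (subst integral_density) auto

lemma rd_density_const:
  assumes R: "finite_measure R" "sets R = sets borel" and c: "measure R (space R) = c" "0 < c"
  shows "real_distribution (density R (\<lambda>_. ennreal (1 / c)))"
  unfolding real_distribution_def real_distribution_axioms_def
proof safe
  interpret R: finite_measure R by fact
  show "prob_space (density R (\<lambda>_. ennreal (1 / c)))"
  proof
    have "emeasure (density R (\<lambda>_. ennreal (1 / c))) (space (density R (\<lambda>_. ennreal (1 / c))))
        = ennreal (1 / c) * emeasure R (space R)"
      by (simp add: emeasure_density_const)
    also have "\<dots> = ennreal (1 / c) * ennreal c" using c by (simp add: R.emeasure_eq_measure)
    also have "\<dots> = 1" using c by (simp flip: ennreal_mult)
    finally show "emeasure (density R (\<lambda>_. ennreal (1 / c))) (space (density R (\<lambda>_. ennreal (1 / c)))) = 1" .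
  qed
qed (use R in auto)

lemma weak_lim_finite:
  fixes R :: "nat \<Rightarrow> real measure" and R0 :: "real measure" and g :: "real \<Rightarrow> real"
  assumes fR: "\<And>n. finite_measure (R n)" and sR: "\<And>n. sets (R n) = sets borel"
    and fR0: "finite_measure R0" and sR0: "sets R0 = sets borel"
    and conv: "\<And>v. (\<lambda>n. char (R n) v) \<longlonglongrightarrow> char R0 v"
    and gc: "\<And>x. isCont g x" and gB: "\<And>x. \<bar>g x\<bar> \<le> B"
  shows "(\<lambda>n. integral\<^sup>L (R n) g) \<longlonglongrightarrow> integral\<^sup>L R0 g"
proof -
  have spR: "space (R n) = UNIV" for n using sets_eq_imp_space_eq[OF sR[of n]] by simp
  have spR0: "space R0 = UNIV" using sets_eq_imp_space_eq[OF sR0] by simp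
  define c where "c n = measure (R n) UNIV" for n
  define c0 where "c0 = measure R0 UNIV"
  have gm[measurable]: "g \<in> borel_measurable borel"
    using gc by (intro borel_measurable_continuous_onI continuous_at_imp_continuous_on) auto
  have c_lim: "c \<longlonglongrightarrow> c0"
  proof -
    have "(\<lambda>n. char (R n) 0) \<longlonglongrightarrow> char R0 0" by (rule conv)
    then have "(\<lambda>n. complex_of_real (c n)) \<longlonglongrightarrow> complex_of_real c0"
      by (simp add: char_zero_measure c_def c0_def spR spR0)
    then show ?thesis by (simp only: tendsto_of_real_iff)
  qed
  have B: "0 \<le> B" using gB[of 0] by simp
  show ?thesis
  proof (cases "c0 = 0")
    case True
    have "\<bar>integral\<^sup>L R0 g\<bar> \<le> B * c0"
      using int_bound_finite[OF fR0 sR0 gm gB] spR0 by (simp add: c0_def)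
    then have I0: "integral\<^sup>L R0 g = 0" using True by simp
    have "(\<lambda>n. integral\<^sup>L (R n) g) \<longlonglongrightarrow> 0"
    proof (rule Lim_null_comparison[where g="\<lambda>n. B * c n"])
      show "eventually (\<lambda>n. norm (integral\<^sup>L (R n) g) \<le> B * c n) sequentially"
        using int_bound_finite[OF fR sR gm gB] spR by (auto simp: c_def)
      show "(\<lambda>n. B * c n) \<longlonglongrightarrow> 0" using tendsto_mult[OF tendsto_const[of B] c_lim] True by simp
    qed
    then show ?thesis using I0 by simp
  next
    case False
    have c0pos: "0 < c0" using False unfolding c0_def by (simp add: zero_less_measure_iff)
    define P where "P n = (if 0 < c n then density (R n) (\<lambda>_. ennreal (1 / c n)) else return borel 0)" for n
    define P0 where "P0 = density R0 (\<lambda>_. ennreal (1 / c0))"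
    have rdP: "real_distribution (P n)" for n
    proof (cases "0 < c n")
      case True then show ?thesis unfolding P_def using rd_density_const[OF fR sR, of n "c n"] spR by (simp add: c_def)
    next
      case False then show ?thesis unfolding P_def real_distribution_def real_distribution_axioms_def
        by (auto intro: prob_space_return)
    qed
    have rdP0: "real_distribution P0"
      unfolding P0_def using rd_density_const[OF fR0 sR0, of c0] spR0 c0pos by (simp add: c0_def)
    have ev: "eventually (\<lambda>n. 0 < c n) sequentially"
      using order_tendstoD(1)[OF c_lim c0pos] .
    have charP: "(\<lambda>n. char (P n) v) \<longlonglongrightarrow> char P0 v" for v
    proof -
      have "(\<lambda>n. complex_of_real (1 / c n) * char (R n) v) \<longlonglongrightarrow> complex_of_real (1 / c0) * char R0 v"
        using c0pos by (intro tendsto_intros conv c_lim) auto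
      moreover have "char P0 v = complex_of_real (1 / c0) * char R0 v"
        unfolding P0_def using c0pos sR0 by (intro char_density_const) auto
      moreover have "eventually (\<lambda>n. complex_of_real (1 / c n) * char (R n) v = char (P n) v) sequentially"
        using ev by eventually_elim (auto simp: P_def char_density_const sR)
      ultimately show ?thesis using tendsto_cong by fastforce
    qed
    have "weak_conv_m P P0" by (rule levy_continuity[OF rdP rdP0 charP])
    then have lim: "(\<lambda>n. integral\<^sup>L (P n) g) \<longlonglongrightarrow> integral\<^sup>L P0 g"
    proof -
      have gB': "\<And>x. norm (g x) \<le> B" using gB by simp
      show ?thesis by (rule weak_conv_imp_integral_bdd_continuous_conv[OF rdP rdP0 \<open>weak_conv_m P P0\<close> gc gB'])
    qed
    have "(\<lambda>n. c n * integral\<^sup>L (P n) g) \<longlonglongrightarrow> c0 * integral\<^sup>L P0 g"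
      by (intro tendsto_intros c_lim lim)
    moreover have "c0 * integral\<^sup>L P0 g = integral\<^sup>L R0 g"
      unfolding P0_def using c0pos sR0 by (subst integral_density_const) auto
    moreover have "eventually (\<lambda>n. c n * integral\<^sup>L (P n) g = integral\<^sup>L (R n) g) sequentially"
      using ev by eventually_elim (auto simp: P_def integral_density_const sR)
    ultimately show ?thesis using tendsto_cong by fastforce
  qed
qed

definition lkf :: "real \<Rightarrow> real \<Rightarrow> complex" where
  "lkf \<beta> \<alpha> = iexp (\<beta> * \<alpha>) - 1 - \<i> * complex_of_real (\<beta> * trunc \<alpha>)"

lemma lkf_zero: "lkf \<beta> 0 = 0"
  by (simp add: lkf_def trunc_def)

lemma lkf_diff: "lkf v \<alpha> - lkf (v + u) \<alpha> = iexp (v * \<alpha>) * (1 - iexp (u * \<alpha>)) + \<i> * complex_of_real (u * trunc \<alpha>)"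
  by (simp add: lkf_def distrib_right exp_add algebra_simps)

lemma LBINT_pow: "(LBINT u:{-1..1::real}. u ^ k) = (1 - (-1) ^ Suc k) / Suc k"
  unfolding set_lebesgue_integral_def using integral_power[of "-1" 1 k]
  by (simp add: mult.commute)

lemma LBINT_id: "(LBINT u:{-1..1::real}. u) = 0"
  using LBINT_pow[of 1] by simp

lemma LBINT_sq: "(LBINT u:{-1..1::real}. u\<^sup>2) = 2/3"
  using LBINT_pow[of 2] by simp

lemma set_int_cont:
  fixes f :: "real \<Rightarrow> 'b::{banach, second_countable_topology}"
  shows "continuous_on {-1..1} f \<Longrightarrow> set_integrable lborel {-1..1} f"
  unfolding set_integrable_def by (rule borel_integrable_compact) auto

locale core = lev_meas lam for lam +
  fixes b q :: real
  assumes q_nonneg: "0 \<le> q"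
begin

abbreviation "ps \<equiv> psi b q lam"

definition "CB r = r * \<bar>b\<bar> + q * r\<^sup>2/2 + (r\<^sup>2/2 + r + 2) * WW"

lemma ps_bound: "cmod (ps \<beta>) \<le> CB \<bar>\<beta>\<bar>"
  using psi_bound[of b q \<beta>] q_nonneg by (simp add: CB_def)

lemma CB_mono: assumes r: "0 \<le> r" "r \<le> s" shows "CB r \<le> CB s"
proof -
  have sq: "r\<^sup>2 \<le> s\<^sup>2" using r by (intro power_mono) auto
  then have 1: "q * r\<^sup>2/2 \<le> q * s\<^sup>2/2" using q_nonneg by (intro divide_right_mono mult_left_mono) auto
  have 2: "r * \<bar>b\<bar> \<le> s * \<bar>b\<bar>" using r by (intro mult_right_mono) auto
  have "r\<^sup>2/2 + r + 2 \<le> s\<^sup>2/2 + s + 2" using sq r by linarith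
  then have 3: "(r\<^sup>2/2 + r + 2) * WW \<le> (s\<^sup>2/2 + s + 2) * WW" using WW_nonneg by (intro mult_right_mono) auto
  show ?thesis unfolding CB_def using 1 2 3 by linarith
qed

lemma ps_cont: "continuous_on S ps"
  by (intro continuous_at_imp_continuous_on ballI isCont_psi)

lemma ps_meas[measurable]: "ps \<in> borel_measurable borel"
  by (intro borel_measurable_continuous_onI ps_cont)

lemma ps_eq: "ps \<beta> = \<i> * complex_of_real (\<beta> * b) - complex_of_real (q * \<beta>\<^sup>2 / 2) + (CLINT \<alpha>|lam. lkf \<beta> \<alpha>)"
  unfolding psi_def lkf_def ..

lemma lkf_integrable: "complex_integrable lam (lkf \<beta>)"
  using lk_integrable[of \<beta>] unfolding lkf_def by simp

lemma lkf_bound: "cmod (lkf \<beta> \<alpha>) \<le> (\<beta>\<^sup>2/2 + \<bar>\<beta>\<bar> + 2) * ww \<alpha>"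
  unfolding lkf_def by (rule lk_bound)

definition "AA = density lam (\<lambda>\<alpha>. ennreal (kk \<alpha>))"

lemma sets_AA[simp, measurable_cong]: "sets AA = sets borel"
  unfolding AA_def by (simp add: sets_lam)

lemma space_AA[simp]: "space AA = UNIV"
  using sets_eq_imp_space_eq[OF sets_AA] by simp

lemma int_kk: "integrable lam kk"
proof (rule Bochner_Integration.integrable_bound)
  show "integrable lam (\<lambda>x. 2 * ww x)" using int_ww by simp
  show "kk \<in> borel_measurable lam" by (intro meas) measurable
  show "AE x in lam. norm (kk x) \<le> norm (2 * ww x)"
    using kk_le kk_nonneg ww_nonneg by (auto intro!: AE_I2)
qed

lemma finite_AA: "finite_measure AA"
proof
  have "emeasure AA (space AA) = (\<integral>\<^sup>+ x. ennreal (kk x) * indicator UNIV x \<partial>lam)"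
    unfolding AA_def by (subst emeasure_density) (auto intro!: meas)
  also have "\<dots> = (\<integral>\<^sup>+ x. ennreal (norm (kk x)) \<partial>lam)" by (simp add: kk_nonneg)
  also have "\<dots> < \<infinity>" using integrableD(2)[OF int_kk] by (simp add: kk_nonneg abs_of_nonneg less_top)
  finally show "emeasure AA (space AA) \<noteq> \<infinity>" by simp
qed

lemma AA0: "emeasure AA {0} = 0"
proof -
  have "emeasure AA {0} = (\<integral>\<^sup>+ x. ennreal (kk x) * indicator {0} x \<partial>lam)"
    unfolding AA_def by (subst emeasure_density) (auto intro!: meas simp: sets_lam)
  also have "\<dots> = (\<integral>\<^sup>+ x. 0 \<partial>lam)"
    by (intro nn_integral_cong) (auto simp: kk_def split: split_indicator)
  finally show ?thesis by simp
qed

lemma AE_AA_nz: "AE x in AA. x \<noteq> 0"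
  by (rule AE_I[of _ _ "{0}"]) (auto simp: AA0)

lemma integral_AA:
  fixes g :: "real \<Rightarrow> 'b::{banach, second_countable_topology}"
  shows "g \<in> borel_measurable borel \<Longrightarrow> integral\<^sup>L AA g = (\<integral>x. kk x *\<^sub>R g x \<partial>lam)"
  unfolding AA_def by (subst integral_density) (auto intro!: meas simp: kk_nonneg)

definition "rho = addpt AA (q/6)"

lemma sets_rho[simp, measurable_cong]: "sets rho = sets borel"
  unfolding rho_def by simp

lemma finite_rho: "finite_measure rho"
  unfolding rho_def by (rule finite_addpt[OF finite_AA sets_AA])

lemma integral_rho:
  fixes g :: "real \<Rightarrow> 'b::{banach, second_countable_topology}"
  assumes "g \<in> borel_measurable borel" "\<And>x. norm (g x) \<le> B"
  shows "integral\<^sup>L rho g = integral\<^sup>L AA g + (q/6) *\<^sub>R g 0"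
  unfolding rho_def using q_nonneg
  by (intro integral_addpt[OF finite_AA sets_AA AA0 _ assms]) simp

lemma char_rho: "char rho v = (CLINT x|AA. iexp (v * x)) + complex_of_real (q/6)"
  unfolding char_def
  by (subst integral_rho[where B=1]) (auto simp: scaleR_conv_of_real simp del: of_real_mult)

definition "C2 r = r\<^sup>2/2 + r + 2"

lemma C2_mono: assumes "0 \<le> (r::real)" "r \<le> s" shows "C2 r \<le> C2 s"
proof -
  have "r\<^sup>2 \<le> s\<^sup>2" using assms by (intro power_mono) auto
  then show ?thesis unfolding C2_def using assms by linarith
qed

lemma D_ratio_bound:
  assumes u: "\<bar>u\<bar> \<le> 1"
  shows "cmod ((lkf v \<alpha> - lkf (v + u) \<alpha>) / complex_of_real (kk \<alpha>)) \<le> 15 * C2 (\<bar>v\<bar> + 1)"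
proof (cases "\<alpha> = 0")
  case True then show ?thesis by (simp add: lkf_zero C2_def)
next
  case False
  have kp: "0 < kk \<alpha>" by (rule kk_pos[OF False])
  have c1: "C2 \<bar>v\<bar> \<le> C2 (\<bar>v\<bar> + 1)" by (intro C2_mono) auto
  have c2: "C2 \<bar>v + u\<bar> \<le> C2 (\<bar>v\<bar> + 1)" using u by (intro C2_mono) auto
  have "cmod (lkf v \<alpha> - lkf (v + u) \<alpha>) \<le> cmod (lkf v \<alpha>) + cmod (lkf (v + u) \<alpha>)"
    by (rule norm_triangle_ineq4)
  also have "\<dots> \<le> C2 \<bar>v\<bar> * ww \<alpha> + C2 \<bar>v + u\<bar> * ww \<alpha>"
    using lkf_bound[of v \<alpha>] lkf_bound[of "v + u" \<alpha>] unfolding C2_def by simp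
  also have "\<dots> \<le> 2 * C2 (\<bar>v\<bar> + 1) * ww \<alpha>"
    using mult_right_mono[OF c1 ww_nonneg[of \<alpha>]] mult_right_mono[OF c2 ww_nonneg[of \<alpha>]] by linarith
  also have "\<dots> \<le> 2 * C2 (\<bar>v\<bar> + 1) * ((15/2) * kk \<alpha>)"
    using kk_ge[of \<alpha>] by (intro mult_left_mono) (auto simp: C2_def)
  finally have X: "cmod (lkf v \<alpha> - lkf (v + u) \<alpha>) \<le> 2 * C2 (\<bar>v\<bar> + 1) * ((15/2) * kk \<alpha>)" .
  have Y: "cmod (lkf v \<alpha> - lkf (v + u) \<alpha>) \<le> (15 * C2 (\<bar>v\<bar> + 1)) * kk \<alpha>"
    using X by (simp add: algebra_simps)
  show ?thesis
    unfolding norm_divide norm_of_real abs_of_pos[OF kp] pos_divide_le_eq[OF kp] by (rule Y)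
qed

lemma inner_u:
  assumes "\<alpha> \<noteq> 0"
  shows "(CLBINT u:{-1..1}. (lkf v \<alpha> - lkf (v + u) \<alpha>) / complex_of_real (kk \<alpha>)) = 2 * iexp (v * \<alpha>)"
proof -
  have kp: "kk \<alpha> \<noteq> 0" using kk_pos[OF assms] by simp
  have si1: "set_integrable lborel {-1..1} (\<lambda>u. iexp (v * \<alpha>) * (1 - iexp (u * \<alpha>)))"
    by (rule set_int_cont) (intro continuous_intros)
  have si2: "set_integrable lborel {-1..1} (\<lambda>u. \<i> * complex_of_real (u * trunc \<alpha>))"
    by (rule set_int_cont) (intro continuous_intros)
  have "(CLBINT u:{-1..1}. (lkf v \<alpha> - lkf (v + u) \<alpha>) / complex_of_real (kk \<alpha>))
      = (CLBINT u:{-1..1}. (1 / complex_of_real (kk \<alpha>)) * (iexp (v * \<alpha>) * (1 - iexp (u * \<alpha>)) + \<i> * complex_of_real (u * trunc \<alpha>)))"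
    by (intro set_lebesgue_integral_cong) (auto simp: lkf_diff)
  also have "\<dots> = (1 / complex_of_real (kk \<alpha>)) * (CLBINT u:{-1..1}. iexp (v * \<alpha>) * (1 - iexp (u * \<alpha>)) + \<i> * complex_of_real (u * trunc \<alpha>))"
    by (rule set_integral_mult_right)
  also have "(CLBINT u:{-1..1}. iexp (v * \<alpha>) * (1 - iexp (u * \<alpha>)) + \<i> * complex_of_real (u * trunc \<alpha>))
      = (CLBINT u:{-1..1}. iexp (v * \<alpha>) * (1 - iexp (u * \<alpha>))) + (CLBINT u:{-1..1}. \<i> * complex_of_real (u * trunc \<alpha>))"
    by (rule set_integral_add(2)[OF si1 si2])
  also have "(CLBINT u:{-1..1}. iexp (v * \<alpha>) * (1 - iexp (u * \<alpha>))) = iexp (v * \<alpha>) * (2 * complex_of_real (kk \<alpha>))"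
    using levy_kernel_int[OF assms] assms by (simp add: kk_def)
  also have "(CLBINT u:{-1..1}. \<i> * complex_of_real (u * trunc \<alpha>)) = \<i> * complex_of_real ((LBINT u:{-1..1}. u) * trunc \<alpha>)"
    by (simp add: set_integral_complex_of_real del: of_real_mult)
  also have "\<dots> = 0" by (simp add: LBINT_id)
  finally show ?thesis using kp by (simp add: field_simps)
qed

lemma K1: "(CLBINT u:{-1..1}. ps v - ps (v + u)) = 2 * char rho v"
proof -
  define I where "I \<beta> = (CLINT \<alpha>|lam. lkf \<beta> \<alpha>)" for \<beta>
  define P1 where "P1 u = q * v * u + (q/2) * u\<^sup>2" for u
  define poly where "poly u = complex_of_real (P1 u) - \<i> * complex_of_real (u * b)" for u
  have split: "ps v - ps (v + u) = poly u + (I v - I (v + u))" for u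
    unfolding ps_eq I_def poly_def P1_def by (simp add: algebra_simps power2_eq_square)
  define F where "F \<alpha> u = (lkf v \<alpha> - lkf (v + u) \<alpha>) / complex_of_real (kk \<alpha>)" for \<alpha> u
  have Idiff: "I v - I (v + u) = (CLINT \<alpha>|AA. F \<alpha> u)" for u
  proof -
    have "I v - I (v + u) = (CLINT \<alpha>|lam. lkf v \<alpha> - lkf (v + u) \<alpha>)"
      unfolding I_def by (rule Bochner_Integration.integral_diff[symmetric]) (auto intro: lkf_integrable)
    also have "\<dots> = (CLINT \<alpha>|lam. kk \<alpha> *\<^sub>R F \<alpha> u)"
    proof (intro Bochner_Integration.integral_cong refl)
      fix \<alpha>
      show "lkf v \<alpha> - lkf (v + u) \<alpha> = kk \<alpha> *\<^sub>R F \<alpha> u"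
      proof (cases "\<alpha> = 0")
        case True then show ?thesis by (simp add: F_def lkf_zero)
      next
        case False then show ?thesis using kk_pos[OF False] by (simp add: F_def scaleR_conv_of_real)
      qed
    qed
    also have "\<dots> = (CLINT \<alpha>|AA. F \<alpha> u)"
      by (rule integral_AA[symmetric]) (simp add: F_def lkf_def)
    finally show ?thesis .
  qed
  have Fm: "(\<lambda>p. F (fst p) (snd p)) \<in> borel_measurable (borel \<Otimes>\<^sub>M borel)"
    unfolding F_def lkf_def by measurable
  have fub: "(CLBINT u:{-1..1}. (CLINT \<alpha>|AA. F \<alpha> u)) = (CLINT \<alpha>|AA. (CLBINT u:{-1..1}. F \<alpha> u))"
    by (rule fubini_Icc[OF finite_AA sets_AA Fm, where B="15 * C2 (\<bar>v\<bar> + 1)"])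
       (auto simp: F_def intro!: D_ratio_bound)
  also have "\<dots> = (CLINT \<alpha>|AA. (if \<alpha> = 0 then 0 else 2 * iexp (v * \<alpha>)))"
  proof (intro Bochner_Integration.integral_cong refl)
    fix \<alpha>
    show "(CLBINT u:{-1..1}. F \<alpha> u) = (if \<alpha> = 0 then 0 else 2 * iexp (v * \<alpha>))"
    proof (cases "\<alpha> = 0")
      case True then show ?thesis by (simp add: F_def lkf_zero)
    next
      case False then show ?thesis unfolding F_def using inner_u[OF False] by simp
    qed
  qed
  also have "\<dots> = (CLINT \<alpha>|AA. 2 * iexp (v * \<alpha>))"
  proof (rule integral_cong_AE)
    show "(\<lambda>\<alpha>. if \<alpha> = 0 then 0 else 2 * iexp (v * \<alpha>)) \<in> borel_measurable AA" by measurable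
    show "(\<lambda>\<alpha>. 2 * iexp (v * \<alpha>)) \<in> borel_measurable AA" by measurable
    show "AE \<alpha> in AA. (if \<alpha> = 0 then 0 else 2 * iexp (v * \<alpha>)) = 2 * iexp (v * \<alpha>)"
      using AE_AA_nz by eventually_elim simp
  qed
  also have "\<dots> = 2 * (CLINT \<alpha>|AA. iexp (v * \<alpha>))"
    by (rule Bochner_Integration.integral_mult_right_zero)
  finally have A: "(CLBINT u:{-1..1}. I v - I (v + u)) = 2 * (CLINT \<alpha>|AA. iexp (v * \<alpha>))"
    by (simp add: Idiff)
  have cpoly: "continuous_on {-1..1} poly" unfolding poly_def P1_def by (intro continuous_intros)
  have sip: "set_integrable lborel {-1..1} poly" by (rule set_int_cont[OF cpoly])
  have siI: "set_integrable lborel {-1..1} (\<lambda>u. I v - I (v + u))"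
  proof (rule set_int_cont)
    have "continuous_on {-1..1} (\<lambda>u. ps v - ps (v + u) - poly u)"
      by (intro continuous_intros cpoly continuous_on_compose2[OF ps_cont[of UNIV]]) auto
    moreover have "(\<lambda>u. ps v - ps (v + u) - poly u) = (\<lambda>u. I v - I (v + u))"
      using split by auto
    ultimately show "continuous_on {-1..1} (\<lambda>u. I v - I (v + u))" by metis
  qed
  have P1int: "(LBINT u:{-1..1}. P1 u) = q / 3"
  proof -
    have s1: "set_integrable lborel {-1..1::real} (\<lambda>u. u)" by (rule set_int_cont) (intro continuous_intros)
    have s2: "set_integrable lborel {-1..1::real} (\<lambda>u. u\<^sup>2)" by (rule set_int_cont) (intro continuous_intros)
    have "(LBINT u:{-1..1}. P1 u) = (LBINT u:{-1..1}. (q * v) * u) + (LBINT u:{-1..1}. (q/2) * u\<^sup>2)"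
      unfolding P1_def by (rule set_integral_add(2)) (use s1 s2 in auto)
    also have "\<dots> = q / 3" by (simp add: LBINT_id LBINT_sq)
    finally show ?thesis .
  qed
  have polyint: "(CLBINT u:{-1..1}. poly u) = complex_of_real (q / 3)"
  proof -
    have s1: "set_integrable lborel {-1..1::real} (\<lambda>u. complex_of_real (P1 u))"
      by (rule set_int_cont) (unfold P1_def, intro continuous_intros)
    have s2: "set_integrable lborel {-1..1::real} (\<lambda>u. \<i> * complex_of_real (u * b))"
      by (rule set_int_cont) (intro continuous_intros)
    have "(CLBINT u:{-1..1}. poly u) = (CLBINT u:{-1..1}. complex_of_real (P1 u)) - (CLBINT u:{-1..1}. \<i> * complex_of_real (u * b))"
      unfolding poly_def by (rule set_integral_diff(2)[OF s1 s2])
    also have "(CLBINT u:{-1..1}. complex_of_real (P1 u)) = complex_of_real (q / 3)"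
      by (simp add: set_integral_complex_of_real P1int)
    also have "(CLBINT u:{-1..1}. \<i> * complex_of_real (u * b)) = 0"
      by (simp add: set_integral_complex_of_real LBINT_id del: of_real_mult)
    finally show ?thesis by simp
  qed
  have "(CLBINT u:{-1..1}. ps v - ps (v + u)) = (CLBINT u:{-1..1}. poly u + (I v - I (v + u)))"
    by (simp add: split)
  also have "\<dots> = (CLBINT u:{-1..1}. poly u) + (CLBINT u:{-1..1}. I v - I (v + u))"
    by (rule set_integral_add(2)[OF sip siI])
  also have "\<dots> = 2 * char rho v"
    unfolding polyint A char_rho by (simp add: field_simps)
  finally show ?thesis .
qed

end

context core
begin

lemma seq_main:
  fixes \<mu> :: "nat \<Rightarrow> real measure" and h :: "nat \<Rightarrow> real"
  assumes \<mu>: "\<And>n. real_distribution (\<mu> n)" and hp: "\<And>n. 0 < h n" and hl: "h \<longlonglongrightarrow> 0"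
    and ch: "\<And>n \<beta>. char (\<mu> n) \<beta> = exp (complex_of_real (h n) * ps \<beta>)"
  shows "(\<lambda>n. (\<integral>x. trunc x \<partial>\<mu> n) / h n) \<longlonglongrightarrow> b"
    and "(\<lambda>n. (\<integral>x. (trunc x)\<^sup>2 \<partial>\<mu> n) / h n) \<longlonglongrightarrow> (\<integral>\<alpha>. ww \<alpha> \<partial>lam) + q"
proof -
  interpret M: real_distribution "\<mu> n" for n by (rule \<mu>)
  have hnz: "h n \<noteq> 0" for n using hp[of n] by simp
  define R where "R n = density (\<mu> n) (\<lambda>x. ennreal (kk x / h n))" for n
  have sR: "sets (R n) = sets borel" for n unfolding R_def by simp
  have fR: "finite_measure (R n)" for n
  proof
    have "emeasure (R n) (space (R n)) = (\<integral>\<^sup>+x. ennreal (kk x / h n) * indicator UNIV x \<partial>\<mu> n)"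
      unfolding R_def by (subst emeasure_density) auto
    also have "\<dots> \<le> (\<integral>\<^sup>+x. ennreal (2 / h n) \<partial>\<mu> n)"
      using kk_le2 hp[of n] by (intro nn_integral_mono) (auto intro!: ennreal_leI divide_right_mono)
    also have "\<dots> = ennreal (2 / h n)" using M.emeasure_space_1 by (simp add: M.space_eq_univ)
    finally show "emeasure (R n) (space (R n)) \<noteq> \<infinity>" by (auto simp: top_unique)
  qed
  have intR: "integral\<^sup>L (R n) g = (\<integral>x. kk x * g x \<partial>\<mu> n) / h n" if g: "g \<in> borel_measurable borel" for g :: "real \<Rightarrow> real" and n
  proof -
    have "integral\<^sup>L (R n) g = (\<integral>x. kk x / h n * g x \<partial>\<mu> n)"
      unfolding R_def using hp[of n] g by (subst integral_real_density) (auto simp: kk_nonneg)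
    also have "\<dots> = (\<integral>x. kk x * g x / h n \<partial>\<mu> n)" by simp
    also have "\<dots> = (\<integral>x. kk x * g x \<partial>\<mu> n) / h n" by (rule integral_divide_zero)
    finally show ?thesis .
  qed
  define Q where "Q n z = (exp (complex_of_real (h n) * z) - 1) / complex_of_real (h n)" for n z
  have charR: "char (R n) v = (1/2) * (CLBINT u:{-1..1}. Q n (ps v) - Q n (ps (v + u)))" for n v
  proof -
    have "char (R n) v = (CLINT x|\<mu> n. (kk x / h n) *\<^sub>R iexp (v * x))"
      unfolding char_def R_def using hp[of n] by (subst integral_density) (auto simp: kk_nonneg)
    also have "\<dots> = (CLINT x|\<mu> n. complex_of_real (kk x) * iexp (v * x) / complex_of_real (h n))"
      by (intro Bochner_Integration.integral_cong refl) (simp add: scaleR_conv_of_real)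
    also have "\<dots> = (CLINT x|\<mu> n. complex_of_real (kk x) * iexp (v * x)) / complex_of_real (h n)"
      by (rule integral_divide_zero)
    also have "(CLINT x|\<mu> n. complex_of_real (kk x) * iexp (v * x))
        = (1/2) * (CLBINT u:{-1..1}. char (\<mu> n) v - char (\<mu> n) (v + u))"
      using kernel_char[OF \<mu>[of n], of v] by simp
    also have "(CLBINT u:{-1..1}. char (\<mu> n) v - char (\<mu> n) (v + u))
        = (CLBINT u:{-1..1}. complex_of_real (h n) * (Q n (ps v) - Q n (ps (v + u))))"
      by (intro set_lebesgue_integral_cong) (auto simp: ch Q_def hnz field_simps)
    also have "\<dots> = complex_of_real (h n) * (CLBINT u:{-1..1}. Q n (ps v) - Q n (ps (v + u)))"
      by (rule set_integral_mult_right)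
    finally show ?thesis using hnz by (simp add: field_simps)
  qed
  have Qb: "cmod (Q n z) \<le> 2 * cmod z" if "Re z \<le> 0" for n z
  proof -
    have "Re (complex_of_real (h n) * z) \<le> 0" using that hp[of n] by (simp add: mult_nonneg_nonpos)
    then have "cmod (exp (complex_of_real (h n) * z) - 1) \<le> 2 * cmod (complex_of_real (h n) * z)"
      by (rule norm_exp_sub1)
    also have "\<dots> = h n * (2 * cmod z)" using hp[of n] by (simp add: norm_mult)
    finally show ?thesis unfolding Q_def using hp[of n] by (simp add: norm_divide pos_divide_le_eq mult.commute)
  qed
  have Qlim: "(\<lambda>n. Q n z) \<longlonglongrightarrow> z" for z
    unfolding Q_def by (rule exp_deriv_lim[OF hl hnz])
  have conv: "(\<lambda>n. char (R n) v) \<longlonglongrightarrow> char rho v" for v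
  proof -
    have "(\<lambda>n. CLBINT u:{-1..1}. Q n (ps v) - Q n (ps (v + u))) \<longlonglongrightarrow> (CLBINT u:{-1..1}. ps v - ps (v + u))"
      unfolding set_lebesgue_integral_def
    proof (rule integral_dominated_convergence[where w="\<lambda>u::real. indicator {-1..1} u * (4 * CB (\<bar>v\<bar> + 1))"])
      show "(\<lambda>u. indicat_real {-1..1} u *\<^sub>R (ps v - ps (v + u))) \<in> borel_measurable lborel" by measurable
      show "(\<lambda>u. indicat_real {-1..1} u *\<^sub>R (Q n (ps v) - Q n (ps (v + u)))) \<in> borel_measurable lborel" for n
        unfolding Q_def by measurable
      show "integrable lborel (\<lambda>u::real. indicator {-1..1} u * (4 * CB (\<bar>v\<bar> + 1)))"
        by (intro integrable_mult_left integrable_real_indicator) simp_all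
      show "AE u in lborel. (\<lambda>n. indicat_real {-1..1} u *\<^sub>R (Q n (ps v) - Q n (ps (v + u))))
          \<longlonglongrightarrow> indicat_real {-1..1} u *\<^sub>R (ps v - ps (v + u))"
        by (intro AE_I2 tendsto_intros Qlim)
      show "AE u in lborel. norm (indicat_real {-1..1} u *\<^sub>R (Q n (ps v) - Q n (ps (v + u))))
          \<le> indicator {-1..1} u * (4 * CB (\<bar>v\<bar> + 1))" for n
      proof (intro AE_I2)
        fix u :: real
        show "norm (indicat_real {-1..1} u *\<^sub>R (Q n (ps v) - Q n (ps (v + u))))
          \<le> indicator {-1..1} u * (4 * CB (\<bar>v\<bar> + 1))"
        proof (cases "u \<in> {-1..1}")
          case True
          then have u: "\<bar>u\<bar> \<le> 1" by auto
          have "cmod (Q n (ps v) - Q n (ps (v + u))) \<le> cmod (Q n (ps v)) + cmod (Q n (ps (v + u)))"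
            by (rule norm_triangle_ineq4)
          also have "\<dots> \<le> 2 * cmod (ps v) + 2 * cmod (ps (v + u))"
            using Qb[OF Re_psi_le[OF q_nonneg, where b=b and \<beta>=v], of n]
              Qb[OF Re_psi_le[OF q_nonneg, where b=b and \<beta>="v + u"], of n] by linarith
          also have "\<dots> \<le> 2 * CB (\<bar>v\<bar> + 1) + 2 * CB (\<bar>v\<bar> + 1)"
          proof -
            have "cmod (ps v) \<le> CB (\<bar>v\<bar> + 1)" using ps_bound[of v] CB_mono[of "\<bar>v\<bar>" "\<bar>v\<bar> + 1"] by simp
            moreover have "cmod (ps (v + u)) \<le> CB (\<bar>v\<bar> + 1)"
            proof -
              have t: "\<bar>v + u\<bar> \<le> \<bar>v\<bar> + 1" using abs_triangle_ineq[of v u] u by linarith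
              show ?thesis using ps_bound[of "v + u"] CB_mono[OF abs_ge_zero t] by linarith
            qed
            ultimately show ?thesis by simp
          qed
          finally show ?thesis using True by simp
        qed simp
      qed
    qed
    then have "(\<lambda>n. char (R n) v) \<longlonglongrightarrow> (1/2) * (CLBINT u:{-1..1}. ps v - ps (v + u))"
      unfolding charR by (intro tendsto_intros)
    then show ?thesis unfolding K1 by simp
  qed
  have wa: "(\<lambda>n. integral\<^sup>L (R n) ga) \<longlonglongrightarrow> integral\<^sup>L rho ga"
    by (rule weak_lim_finite[OF fR sR finite_rho sets_rho conv isCont_ga ga_bound])
  have wb: "(\<lambda>n. integral\<^sup>L (R n) gb) \<longlonglongrightarrow> integral\<^sup>L rho gb"
    by (rule weak_lim_finite[OF fR sR finite_rho sets_rho conv isCont_gb gb_bound])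
  have gam[measurable]: "ga \<in> borel_measurable borel"
    by (intro borel_measurable_continuous_onI continuous_at_imp_continuous_on ballI isCont_ga)
  have gbm[measurable]: "gb \<in> borel_measurable borel"
    by (intro borel_measurable_continuous_onI continuous_at_imp_continuous_on ballI isCont_gb)
  have rho_ga: "integral\<^sup>L rho ga = (\<integral>\<alpha>. trunc \<alpha> - sin \<alpha> \<partial>lam)"
  proof -
    have "integral\<^sup>L rho ga = integral\<^sup>L AA ga + (q/6) *\<^sub>R ga 0"
      by (rule integral_rho[where B=15]) (use ga_bound in auto)
    also have "\<dots> = (\<integral>\<alpha>. kk \<alpha> * ga \<alpha> \<partial>lam)" by (simp add: integral_AA ga_def)
    also have "\<dots> = (\<integral>\<alpha>. trunc \<alpha> - sin \<alpha> \<partial>lam)" by (simp add: kk_ga)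
    finally show ?thesis .
  qed
  have rho_gb: "integral\<^sup>L rho gb = (\<integral>\<alpha>. ww \<alpha> \<partial>lam) + q"
  proof -
    have "integral\<^sup>L rho gb = integral\<^sup>L AA gb + (q/6) *\<^sub>R gb 0"
      by (rule integral_rho[where B=8]) (use gb_bound in auto)
    also have "\<dots> = (\<integral>\<alpha>. kk \<alpha> * gb \<alpha> \<partial>lam) + q" by (simp add: integral_AA gb_def)
    also have "(\<integral>\<alpha>. kk \<alpha> * gb \<alpha> \<partial>lam) = (\<integral>\<alpha>. ww \<alpha> \<partial>lam)" by (simp add: kk_gb trunc_sq)
    finally show ?thesis .
  qed
  show "(\<lambda>n. (\<integral>x. (trunc x)\<^sup>2 \<partial>\<mu> n) / h n) \<longlonglongrightarrow> (\<integral>\<alpha>. ww \<alpha> \<partial>lam) + q"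
  proof -
    have "integral\<^sup>L (R n) gb = (\<integral>x. (trunc x)\<^sup>2 \<partial>\<mu> n) / h n" for n
      by (simp add: intR kk_gb)
    then show ?thesis using wb rho_gb by simp
  qed
  show "(\<lambda>n. (\<integral>x. trunc x \<partial>\<mu> n) / h n) \<longlonglongrightarrow> b"
  proof -
    have ib: "integrable (\<mu> n) f" if "f \<in> borel_measurable borel" "\<And>x. \<bar>f x\<bar> \<le> B" for f :: "real \<Rightarrow> real" and n B
      by (rule M.integrable_const_bound[where B=B]) (use that in auto)
    have split: "(\<integral>x. trunc x \<partial>\<mu> n) / h n = Im (Q n (ps 1)) + integral\<^sup>L (R n) ga" for n
    proof -
      have b2: "\<bar>trunc x - sin x\<bar> \<le> 2" for x
        using abs_trunc_le1[of x] abs_sin_le_one[of x] by arith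
      have kg: "integrable (\<mu> n) (\<lambda>x. kk x * ga x)"
        unfolding kk_ga by (rule ib[of _ 2]) (use b2 in auto)
      have "(\<integral>x. trunc x \<partial>\<mu> n) = (\<integral>x. sin x + kk x * ga x \<partial>\<mu> n)" by (simp add: kk_ga)
      also have "\<dots> = (\<integral>x. sin x \<partial>\<mu> n) + (\<integral>x. kk x * ga x \<partial>\<mu> n)"
        by (rule Bochner_Integration.integral_add[OF ib[of sin 1] kg]) (auto simp: abs_sin_le_one)
      also have "(\<integral>x. sin x \<partial>\<mu> n) = Im (char (\<mu> n) 1)"
      proof -
        have "Im (char (\<mu> n) 1) = (\<integral>x. Im (iexp (1 * x)) \<partial>\<mu> n)"
          unfolding char_def by (rule integral_Im[symmetric]) (rule M.integrable_const_bound[where B=1], auto)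
        then show ?thesis by (simp add: Im_exp)
      qed
      also have "char (\<mu> n) 1 = complex_of_real (h n) * Q n (ps 1) + 1"
        using hnz by (simp add: ch Q_def)
      finally have "(\<integral>x. trunc x \<partial>\<mu> n) = h n * Im (Q n (ps 1)) + (\<integral>x. kk x * ga x \<partial>\<mu> n)" by simp
      then show ?thesis using hnz by (simp add: intR field_simps)
    qed
    have "(\<lambda>n. Im (Q n (ps 1)) + integral\<^sup>L (R n) ga) \<longlonglongrightarrow> Im (ps 1) + integral\<^sup>L rho ga"
      by (intro tendsto_intros Qlim wa)
    moreover have "Im (ps 1) + integral\<^sup>L rho ga = b"
    proof -
      have Il: "Im (CLINT \<alpha>|lam. lkf 1 \<alpha>) = (\<integral>\<alpha>. sin \<alpha> - trunc \<alpha> \<partial>lam)"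
      proof -
        have "Im (CLINT \<alpha>|lam. lkf 1 \<alpha>) = (\<integral>\<alpha>. Im (lkf 1 \<alpha>) \<partial>lam)"
          by (rule integral_Im[symmetric]) (rule lkf_integrable)
        also have "\<dots> = (\<integral>\<alpha>. sin \<alpha> - trunc \<alpha> \<partial>lam)" by (simp add: lkf_def Im_exp)
        finally show ?thesis .
      qed
      have ii: "integrable lam (\<lambda>\<alpha>. sin \<alpha> - trunc \<alpha>)"
        using integrable_Im[OF lkf_integrable[of 1]] by (simp add: lkf_def Im_exp)
      have "integral\<^sup>L rho ga = - (\<integral>\<alpha>. sin \<alpha> - trunc \<alpha> \<partial>lam)"
        unfolding rho_ga by (subst Bochner_Integration.integral_minus[symmetric]) simp
      then show ?thesis unfolding ps_eq using Il by simp
    qed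
    ultimately show ?thesis unfolding split by simp
  qed
qed

lemma core_lim:
  fixes \<mu> :: "real \<Rightarrow> real measure"
  assumes \<mu>: "\<And>h. 0 < h \<Longrightarrow> real_distribution (\<mu> h)"
    and ch: "\<And>h \<beta>. 0 < h \<Longrightarrow> char (\<mu> h) \<beta> = exp (complex_of_real h * ps \<beta>)"
  shows "((\<lambda>h. (\<integral>x. trunc x \<partial>\<mu> h) / h) \<longlongrightarrow> b) (at_right 0)"
    and "((\<lambda>h. (\<integral>x. (trunc x)\<^sup>2 \<partial>\<mu> h) / h) \<longlongrightarrow> (\<integral>\<alpha>. ww \<alpha> \<partial>lam) + q) (at_right 0)"
proof -
  show "((\<lambda>h. (\<integral>x. trunc x \<partial>\<mu> h) / h) \<longlongrightarrow> b) (at_right 0)"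
    unfolding tendsto_at_iff_sequentially comp_def
  proof safe
    fix X :: "nat \<Rightarrow> real" assume X: "\<forall>i. X i \<in> {0<..} - {0}" "X \<longlonglongrightarrow> 0"
    then have Xp: "0 < X i" for i by auto
    show "(\<lambda>n. (\<integral>x. trunc x \<partial>\<mu> (X n)) / X n) \<longlonglongrightarrow> b"
      by (rule seq_main(1)[of "\<lambda>n. \<mu> (X n)" X]) (use Xp X(2) \<mu> ch in auto)
  qed
  show "((\<lambda>h. (\<integral>x. (trunc x)\<^sup>2 \<partial>\<mu> h) / h) \<longlongrightarrow> (\<integral>\<alpha>. ww \<alpha> \<partial>lam) + q) (at_right 0)"
    unfolding tendsto_at_iff_sequentially comp_def
  proof safe
    fix X :: "nat \<Rightarrow> real" assume X: "\<forall>i. X i \<in> {0<..} - {0}" "X \<longlonglongrightarrow> 0"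
    then have Xp: "0 < X i" for i by auto
    show "(\<lambda>n. (\<integral>x. (trunc x)\<^sup>2 \<partial>\<mu> (X n)) / X n) \<longlonglongrightarrow> (\<integral>\<alpha>. ww \<alpha> \<partial>lam) + q"
      by (rule seq_main(2)[of "\<lambda>n. \<mu> (X n)" X]) (use Xp X(2) \<mu> ch in auto)
  qed
qed

end

lemma telescope_1:
  fixes g :: "nat \<Rightarrow> real" and m :: nat
  shows "(\<Sum>k=1..m. g k - g (k - 1)) = g m - g 0"
  by (induction m) (auto simp: sum.atLeast_Suc_atMost)

lemma partition_sum:
  fixes f :: "real \<Rightarrow> real" and c :: real
  assumes lim: "((\<lambda>h. f h / h) \<longlongrightarrow> c) (at_right 0)"
    and np: "normal_partitions s t m p" and st: "s < t"
  shows "(\<lambda>n. \<Sum>k=1..m n. f (p n k - p n (k - 1))) \<longlonglongrightarrow> (t - s) * c"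
proof -
  have P: "p n 0 = s" "p n (m n) = t" "\<And>k. k < m n \<Longrightarrow> p n k < p n (Suc k)" for n
    using np unfolding normal_partitions_def by auto
  define Mx where "Mx n = Max {p n k - p n (k - 1) | k. 1 \<le> k \<and> k \<le> m n}" for n
  have mesh: "Mx \<longlonglongrightarrow> 0" using np unfolding normal_partitions_def Mx_def by auto
  define d where "d n k = p n k - p n (k - 1)" for n k
  have dpos: "0 < d n k" if "k \<in> {1..m n}" for n k
  proof -
    have "k - 1 < m n" "Suc (k - 1) = k" using that by auto
    then show ?thesis using P(3)[of "k - 1" n] unfolding d_def by simp
  qed
  have dsum: "(\<Sum>k=1..m n. d n k) = t - s" for n
    unfolding d_def using telescope_1[of "p n" "m n"] P[of n] by simp
  have dle: "d n k \<le> Mx n" if "k \<in> {1..m n}" for n k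
  proof -
    have "{p n k - p n (k - 1) | k. 1 \<le> k \<and> k \<le> m n} = (\<lambda>k. p n k - p n (k - 1)) ` {1..m n}" by auto
    then show ?thesis unfolding Mx_def d_def using that by (auto intro!: Max_ge)
  qed
  show ?thesis
  proof (rule tendstoI)
    fix \<epsilon> :: real assume \<epsilon>: "0 < \<epsilon>"
    define e where "e = \<epsilon> / (2 * (t - s))"
    have e: "0 < e" unfolding e_def using \<epsilon> st by simp
    have "eventually (\<lambda>h. dist (f h / h) c < e) (at_right 0)"
      using tendstoD[OF lim e] .
    then obtain \<delta> where \<delta>0: "0 < \<delta>" and \<delta>P: "\<forall>y>0. y < \<delta> \<longrightarrow> dist (f y / y) c < e"
      unfolding eventually_at_right_field by auto
    have \<delta>: "0 < \<delta>" "\<And>h. 0 < h \<Longrightarrow> h < \<delta> \<Longrightarrow> dist (f h / h) c < e" using \<delta>0 \<delta>P by auto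
    have "eventually (\<lambda>n. Mx n < \<delta>) sequentially"
      using order_tendstoD(2)[OF mesh \<delta>(1)] .
    then show "eventually (\<lambda>n. dist (\<Sum>k=1..m n. f (p n k - p n (k - 1))) ((t - s) * c) < \<epsilon>) sequentially"
    proof eventually_elim
      case (elim n)
      have each: "\<bar>f (d n k) - c * d n k\<bar> \<le> e * d n k" if k: "k \<in> {1..m n}" for k
      proof -
        have dp: "0 < d n k" by (rule dpos[OF k])
        have "d n k < \<delta>" using dle[OF k] elim by linarith
        then have "dist (f (d n k) / d n k) c < e" using \<delta>(2) dp by blast
        then have "\<bar>f (d n k) / d n k - c\<bar> \<le> e" by (simp add: dist_real_def)
        then have "\<bar>f (d n k) / d n k - c\<bar> * d n k \<le> e * d n k" using dp by (intro mult_right_mono) auto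
        moreover have "\<bar>f (d n k) / d n k - c\<bar> * d n k = \<bar>f (d n k) - c * d n k\<bar>"
          using dp by (simp add: abs_mult_pos[symmetric] abs_of_pos field_simps)
        ultimately show ?thesis by simp
      qed
      have cs: "(\<Sum>k=1..m n. c * d n k) = (t - s) * c"
        unfolding sum_distrib_left[symmetric] dsum by (simp add: mult.commute)
      have "\<bar>(\<Sum>k=1..m n. f (d n k)) - (t - s) * c\<bar> = \<bar>\<Sum>k=1..m n. f (d n k) - c * d n k\<bar>"
        by (simp only: sum_subtractf cs)
      also have "\<dots> \<le> (\<Sum>k=1..m n. \<bar>f (d n k) - c * d n k\<bar>)" by (rule sum_abs)
      also have "\<dots> \<le> (\<Sum>k=1..m n. e * d n k)" by (intro sum_mono each)
      also have "\<dots> = e * (t - s)" unfolding sum_distrib_left[symmetric] dsum ..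
      also have "\<dots> = \<epsilon> / 2" unfolding e_def using st by (simp add: field_simps)
      also have "\<dots> < \<epsilon>" using \<epsilon> by simp
      finally show ?case unfolding d_def dist_real_def .
    qed
  qed
qed

theorem lemma3p9:
  fixes M :: "'a measure" and L :: "real \<Rightarrow> 'a \<Rightarrow> real"
    and b q s t :: real and lam :: "real measure"
    and m :: "nat \<Rightarrow> nat" and p :: "nat \<Rightarrow> nat \<Rightarrow> real"
  assumes "levy_process M L"
    and "levy_characteristics M L b q lam"
    and "0 \<le> s" and "s < t"
    and "normal_partitions s t m p"
  shows "((\<lambda>n. \<Sum>k=1..m n. integral\<^sup>L M (\<lambda>\<omega>. trunc (L (p n k) \<omega> - L (p n (k - 1)) \<omega>)))
           \<longlonglongrightarrow> (t - s) * b)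
         \<and> ((\<lambda>n. \<Sum>k=1..m n. integral\<^sup>L M (\<lambda>\<omega>. (trunc (L (p n k) \<omega> - L (p n (k - 1)) \<omega>))\<^sup>2))
           \<longlonglongrightarrow> (t - s) * ((\<integral>\<beta>. min (\<bar>\<beta>\<bar>\<^sup>2) 1 \<partial>lam) + q))"
proof -
  note lev = assms(1) and ch = assms(2) and s0 = assms(3) and st = assms(4) and np = assms(5)
  have lm: "lev_meas lam"
    using ch unfolding levy_characteristics_def lev_meas_def ww_def[abs_def] by auto
  have lpi: "lp M L" by (rule lp.intro[OF lev])
  have lpci: "lpc M L b q lam" by (intro lpc.intro lpi lm lpc_axioms.intro ch lev)
  interpret core lam b q
    by (intro core.intro core_axioms.intro lm lpc.q_nonneg[OF lpci])
  define mu where "mu = lp.mu M L"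
  have rd: "real_distribution (mu h)" if "0 < h" for h using lp.mu_rd[OF lpi, of h] that unfolding mu_def by simp
  have chh: "char (mu h) \<beta> = exp (complex_of_real h * ps \<beta>)" if "0 < h" for h \<beta>
    using lpc.phi_exp[OF lpci, of h \<beta>, unfolded lp.phi_def[OF lpi]] that unfolding mu_def by simp
  have fa: "((\<lambda>h. (\<integral>x. trunc x \<partial>mu h) / h) \<longlongrightarrow> b) (at_right 0)"
    by (rule core_lim(1)[OF rd chh])
  have fb: "((\<lambda>h. (\<integral>x. (trunc x)\<^sup>2 \<partial>mu h) / h) \<longlongrightarrow> (\<integral>\<alpha>. ww \<alpha> \<partial>lam) + q) (at_right 0)"
    by (rule core_lim(2)[OF rd chh])
  have P: "p n 0 = s" "\<And>k. k < m n \<Longrightarrow> p n k < p n (Suc k)" for n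
    using np unfolding normal_partitions_def by auto
  have ge_s: "j \<le> m n \<Longrightarrow> s \<le> p n j" for n j
  proof (induction j)
    case 0 then show ?case using P(1) by simp
  next
    case (Suc j) then show ?case using P(2)[of j n] by simp
  qed
  have incr: "k \<in> {1..m n} \<Longrightarrow> p n (k - 1) \<le> p n k" for n k
    using P(2)[of "k - 1" n] by (cases k) auto
  have eqint: "integral\<^sup>L M (\<lambda>\<omega>. g (L (p n k) \<omega> - L (p n (k - 1)) \<omega>)) = (\<integral>x. g x \<partial>mu (p n k - p n (k - 1)))"
    if k: "k \<in> {1..m n}" and g: "g \<in> borel_measurable borel" for g :: "real \<Rightarrow> real" and n k
  proof -
    have a: "0 \<le> p n (k - 1)" using ge_s[of "k - 1" n] k s0 by force
    have b': "p n (k - 1) \<le> p n k" by (rule incr[OF k])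
    have "(\<integral>x. g x \<partial>mu (p n k - p n (k - 1))) = (\<integral>x. g x \<partial>distr M borel (\<lambda>\<omega>. L (p n k) \<omega> - L (p n (k - 1)) \<omega>))"
      unfolding mu_def lp.mu_def[OF lpi] using lp.stat[OF lpi a b'] by simp
    also have "\<dots> = integral\<^sup>L M (\<lambda>\<omega>. g (L (p n k) \<omega> - L (p n (k - 1)) \<omega>))"
      using a b' g lp.L_meas[OF lpi] by (subst integral_distr) auto
    finally show ?thesis by simp
  qed
  have A: "(\<lambda>n. \<Sum>k=1..m n. (\<integral>x. trunc x \<partial>mu (p n k - p n (k - 1)))) \<longlonglongrightarrow> (t - s) * b"
    by (rule partition_sum[OF fa np st])
  have B: "(\<lambda>n. \<Sum>k=1..m n. (\<integral>x. (trunc x)\<^sup>2 \<partial>mu (p n k - p n (k - 1)))) \<longlonglongrightarrow> (t - s) * ((\<integral>\<alpha>. ww \<alpha> \<partial>lam) + q)"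
    by (rule partition_sum[OF fb np st])
  have ww_eq: "(\<integral>\<beta>. min (\<bar>\<beta>\<bar>\<^sup>2) 1 \<partial>lam) = (\<integral>\<alpha>. ww \<alpha> \<partial>lam)"
    by (simp add: ww_def)
  have sA: "(\<Sum>k=1..m n. integral\<^sup>L M (\<lambda>\<omega>. trunc (L (p n k) \<omega> - L (p n (k - 1)) \<omega>)))
      = (\<Sum>k=1..m n. (\<integral>x. trunc x \<partial>mu (p n k - p n (k - 1))))" for n
    by (intro sum.cong refl eqint) auto
  have sB: "(\<Sum>k=1..m n. integral\<^sup>L M (\<lambda>\<omega>. (trunc (L (p n k) \<omega> - L (p n (k - 1)) \<omega>))\<^sup>2))
      = (\<Sum>k=1..m n. (\<integral>x. (trunc x)\<^sup>2 \<partial>mu (p n k - p n (k - 1))))" for n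
    by (intro sum.cong refl eqint[where g="\<lambda>x. (trunc x)\<^sup>2"]) auto
  show ?thesis unfolding sA sB ww_eq using A B by simp
qed

end
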